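(* Let $f$ be a Hamiltonian stationary torus and $h=h^{A,B}\in\mathrm{Spec}$ a multiplier of a holomorphic section with $A\ne0$. Then the complex dimension of the space $H^0_h$ of holomorphic sections with multiplier $h$ is at most $2$, and $\dim_{\mathbb C}H^0_{h}=2$ if and only if $A$ is a double point, that is $$A=-\frac i2\,\zeta\sqrt{1-\frac{|\beta_0|^2}{|\zeta|^2}},\qquad \zeta\in\Gamma^*,\ |\zeta|>|\beta_0|.$$
   Context: Identify $\mathbb R^4$ with $\mathbb H$ and $\mathbb C$ with $\mathrm{span}_{\mathbb R}\{1,i\}$; $\langle\cdot,\cdot\rangle$ is the Euclidean inner product on $\mathbb C\cong\mathbb R^2$. $\Gamma\subset\mathbb C$ a lattice, $\Gamma^*$ its dual lattice. A Hamiltonian stationary torus is a $\Gamma$-periodic conformal immersion $f:\mathbb C\to\mathbb H$ with $df=e^{j\beta/2}dz\,g$, $dz=dx+i\,dy$, $g$ nowhere zero, $\beta(z)=2\pi\langle\beta_0,z\rangle$ with $0\ne\beta_0\in\Gamma^*$. Convention $*dz=i\,dz$; left normal $N=e^{j\beta}i$. $\alpha:\mathbb C\to\mathbb H$ is holomorphic if $*d\alpha=N\,d\alpha$. For a homomorphism $h:\Gamma\to\mathbb C_*$, $H^0_h$ is the complex space of holomorphic $\alpha$ with $\alpha(z+\gamma)=\alpha(z)h(\gamma)$ ($\gamma\in\Gamma$); $\mathrm{Spec}=\{h:H^0_h\ne0\}$. $h^{A,B}(\gamma)=e^{2\pi(\langle A,\gamma\rangle-i\langle B,\gamma\rangle)}$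 for $(A,B)\in\mathbb C^2$. *)

theory Defs
  imports "HOL-Analysis.Analysis" "HOL-Library.Function_Algebras"
begin

text \<open>Quaternions are modelled as pairs of complex numbers: (a,b) stands for a + b j,
  where C = span{1,i} and j c = cnj c j, j^2 = -1.  The underlying real vector space
  complex * complex is R^4 with its Euclidean structure.\<close>

type_synonym quat = "complex \<times> complex"

definition qmul :: "quat \<Rightarrow> quat \<Rightarrow> quat" where
  "qmul p q = (fst p * fst q - snd p * cnj (snd q), fst p * snd q + snd p * cnj (fst q))"

definition qc :: "complex \<Rightarrow> quat" where
  "qc z = (z, 0)"

definition qexpj :: "real \<Rightarrow> quat" where
  "qexpj t = (complex_of_real (cos t), complex_of_real (sin t))"

definition is_lattice :: "complex set \<Rightarrow> bool" where
  "is_lattice \<Gamma> \<longleftrightarrow> (\<exists>w1 w2. Im (cnj w1 * w2) \<noteq> 0 \<and>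
      \<Gamma> = {of_int m * w1 + of_int n * w2 | m n. True})"

definition dual_lattice :: "complex set \<Rightarrow> complex set" where
  "dual_lattice \<Gamma> = {\<zeta>. \<forall>\<gamma>\<in>\<Gamma>. \<zeta> \<bullet> \<gamma> \<in> \<int>}"

definition betaf :: "complex \<Rightarrow> complex \<Rightarrow> real" where
  "betaf \<beta>0 z = 2 * pi * (\<beta>0 \<bullet> z)"

definition normalN :: "complex \<Rightarrow> complex \<Rightarrow> quat" where
  "normalN \<beta>0 z = qmul (qexpj (betaf \<beta>0 z)) (qc \<i>)"

definition ham_stat_torus :: "complex set \<Rightarrow> complex \<Rightarrow> (complex \<Rightarrow> quat) \<Rightarrow> (complex \<Rightarrow> quat) \<Rightarrow> bool" where
  "ham_stat_torus \<Gamma> \<beta>0 f g \<longleftrightarrow>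
     is_lattice \<Gamma> \<and> \<beta>0 \<in> dual_lattice \<Gamma> \<and> \<beta>0 \<noteq> 0 \<and>
     (\<forall>z. g z \<noteq> 0) \<and>
     (\<forall>z. (f has_derivative (\<lambda>v. qmul (qmul (qexpj (betaf \<beta>0 z / 2)) (qc v)) (g z))) (at z)) \<and>
     (\<forall>\<gamma>\<in>\<Gamma>. \<forall>z. f (z + \<gamma>) = f z)"

text \<open>Holomorphic: *d alpha = N d alpha with *omega = omega o J (so *dz = i dz), i.e.
  d alpha (i v) = N d alpha (v); alpha is required to be C^1.\<close>
definition holo :: "complex \<Rightarrow> (complex \<Rightarrow> quat) \<Rightarrow> bool" where
  "holo \<beta>0 \<alpha> \<longleftrightarrow> (\<exists>D. (\<forall>z. (\<alpha> has_derivative D z) (at z)) \<and>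
      continuous_on UNIV (\<lambda>z. D z 1) \<and> continuous_on UNIV (\<lambda>z. D z \<i>) \<and>
      (\<forall>z v. D z (\<i> * v) = qmul (normalN \<beta>0 z) (D z v)))"

definition H0 :: "complex set \<Rightarrow> complex \<Rightarrow> (complex \<Rightarrow> complex) \<Rightarrow> (complex \<Rightarrow> quat) set" where
  "H0 \<Gamma> \<beta>0 h = {\<alpha>. holo \<beta>0 \<alpha> \<and> (\<forall>\<gamma>\<in>\<Gamma>. \<forall>z. \<alpha> (z + \<gamma>) = qmul (\<alpha> z) (qc (h \<gamma>)))}"

definition Spec :: "complex set \<Rightarrow> complex \<Rightarrow> (complex \<Rightarrow> complex) set" where
  "Spec \<Gamma> \<beta>0 = {h. (\<forall>\<gamma>\<in>\<Gamma>. h \<gamma> \<noteq> 0) \<and> H0 \<Gamma> \<beta>0 h \<noteq> {0}}"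

definition hAB :: "complex \<Rightarrow> complex \<Rightarrow> complex \<Rightarrow> complex" where
  "hAB A B \<gamma> = exp (2 * of_real pi * (of_real (A \<bullet> \<gamma>) - \<i> * of_real (B \<bullet> \<gamma>)))"

definition rscale :: "complex \<Rightarrow> (complex \<Rightarrow> quat) \<Rightarrow> (complex \<Rightarrow> quat)" where
  "rscale c \<alpha> = (\<lambda>z. qmul (\<alpha> z) (qc c))"

lemma vector_space_rscale: "vector_space rscale"
  by unfold_locales
     (auto simp: rscale_def qmul_def qc_def fun_eq_iff algebra_simps)

definition cdim :: "(complex \<Rightarrow> quat) set \<Rightarrow> nat" where
  "cdim V = vector_space.dim rscale V"

definition cfinite_dim :: "(complex \<Rightarrow> quat) set \<Rightarrow> bool" where
  "cfinite_dim V \<longleftrightarrow> (\<exists>B. finite B \<and> B \<subseteq> V \<and> module.span rscale B = V)"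

definition double_point :: "complex set \<Rightarrow> complex \<Rightarrow> complex \<Rightarrow> bool" where
  "double_point \<Gamma> \<beta>0 A \<longleftrightarrow> (\<exists>\<zeta>\<in>dual_lattice \<Gamma>. norm \<zeta> > norm \<beta>0 \<and>
      A = - (\<i> / 2) * \<zeta> * of_real (sqrt (1 - (norm \<beta>0)\<^sup>2 / (norm \<zeta>)\<^sup>2)))"

end

theory Submission
  imports Defs
begin


definition ek :: "int \<Rightarrow> int \<Rightarrow> real \<times> real \<Rightarrow> complex" where
  "ek m n x = exp (2 * of_real pi * \<i> * (of_int m * of_real (fst x) + of_int n * of_real (snd x)))"

lemma ek_mult: "ek m n x * ek m' n' x = ek (m+m') (n+n') x"
  unfolding ek_def by (simp add: exp_add[symmetric] algebra_simps)

lemma ek_00: "ek 0 0 x = 1" by (simp add: ek_def)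

lemma continuous_ek: "continuous_on S (ek m n)"
  unfolding ek_def by (intro continuous_intros)

lemma cos_r: "complex_of_real (cos t) = (exp (\<i> * of_real t) + exp (-(\<i> * of_real t)))/2"
  by (simp add: cos_of_real[symmetric] cos_exp_eq)
lemma sin_r: "complex_of_real (sin t) = (exp (\<i> * of_real t) - exp (-(\<i> * of_real t)))/(2*\<i>)"
  by (simp add: sin_of_real[symmetric] sin_exp_eq)

inductive_set TP :: "(real \<times> real \<Rightarrow> complex) set" where
  TP_ek: "ek m n \<in> TP"
| TP_scale: "f \<in> TP \<Longrightarrow> (\<lambda>x. c * f x) \<in> TP"
| TP_add: "f \<in> TP \<Longrightarrow> g \<in> TP \<Longrightarrow> (\<lambda>x. f x + g x) \<in> TP"

lemma TP_cont: "f \<in> TP \<Longrightarrow> continuous_on S f"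
  by (induction rule: TP.induct) (auto intro!: continuous_intros continuous_ek)

lemma TP_const: "(\<lambda>x. c) \<in> TP"
  using TP_scale[OF TP_ek[of 0 0], of c] by (simp add: ek_00)

lemma TP_mult_ek: "f \<in> TP \<Longrightarrow> (\<lambda>x. ek m n x * f x) \<in> TP"
proof (induction rule: TP.induct)
  case (TP_ek m' n') then show ?case by (simp add: ek_mult TP.TP_ek)
next
  case (TP_scale f c)
  then show ?case using TP.TP_scale[OF TP_scale.IH, of c] by (simp add: algebra_simps)
next
  case (TP_add f g)
  then show ?case using TP.TP_add[OF TP_add.IH] by (simp add: algebra_simps)
qed

lemma TP_mult: "f \<in> TP \<Longrightarrow> g \<in> TP \<Longrightarrow> (\<lambda>x. f x * g x) \<in> TP"
proof (induction rule: TP.induct)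
  case (TP_ek m n) then show ?case by (rule TP_mult_ek)
next
  case (TP_scale f c)
  then show ?case using TP.TP_scale[OF TP_scale.IH, of c] by (simp add: algebra_simps)
next
  case (TP_add f g')
  then show ?case using TP.TP_add[OF TP_add.IH] by (simp add: algebra_simps)
qed

lemma TP_cos1: "(\<lambda>x. complex_of_real (cos (2 * pi * fst x))) \<in> TP"
proof -
  have "(\<lambda>x. (1/2) * ek 1 0 x + (1/2) * ek (-1) 0 x) \<in> TP"
    by (intro TP_add TP_scale TP_ek)
  moreover have "(\<lambda>x. (1/2) * ek 1 0 x + (1/2) * ek (-1) 0 x) = (\<lambda>x. complex_of_real (cos (2 * pi * fst x)))"
    by (rule ext, subst cos_r) (simp add: ek_def field_simps exp_minus)
  ultimately show ?thesis by simp
qed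

lemma TP_sin1: "(\<lambda>x. complex_of_real (sin (2 * pi * fst x))) \<in> TP"
proof -
  have "(\<lambda>x. (-\<i>/2) * ek 1 0 x + (\<i>/2) * ek (-1) 0 x) \<in> TP"
    by (intro TP_add TP_scale TP_ek)
  moreover have "(\<lambda>x. (-\<i>/2) * ek 1 0 x + (\<i>/2) * ek (-1) 0 x) = (\<lambda>x. complex_of_real (sin (2 * pi * fst x)))"
    by (rule ext, subst sin_r) (simp add: ek_def field_simps exp_minus)
  ultimately show ?thesis by simp
qed

lemma TP_cos2: "(\<lambda>x. complex_of_real (cos (2 * pi * snd x))) \<in> TP"
proof -
  have "(\<lambda>x. (1/2) * ek 0 1 x + (1/2) * ek 0 (-1) x) \<in> TP"
    by (intro TP_add TP_scale TP_ek)
  moreover have "(\<lambda>x. (1/2) * ek 0 1 x + (1/2) * ek 0 (-1) x) = (\<lambda>x. complex_of_real (cos (2 * pi * snd x)))"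
    by (rule ext, subst cos_r) (simp add: ek_def field_simps exp_minus)
  ultimately show ?thesis by simp
qed

lemma TP_sin2: "(\<lambda>x. complex_of_real (sin (2 * pi * snd x))) \<in> TP"
proof -
  have "(\<lambda>x. (-\<i>/2) * ek 0 1 x + (\<i>/2) * ek 0 (-1) x) \<in> TP"
    by (intro TP_add TP_scale TP_ek)
  moreover have "(\<lambda>x. (-\<i>/2) * ek 0 1 x + (\<i>/2) * ek 0 (-1) x) = (\<lambda>x. complex_of_real (sin (2 * pi * snd x)))"
    by (rule ext, subst sin_r) (simp add: ek_def field_simps exp_minus)
  ultimately show ?thesis by simp
qed

definition tor :: "real \<times> real \<Rightarrow> complex \<times> complex" where
  "tor x = (cis (2 * pi * fst x), cis (2 * pi * snd x))"

lemma blin_decomp: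
  assumes "bounded_linear r"
  shows "r (u::complex, v::complex) = Re u * r (1,0) + Im u * r (\<i>,0) + Re v * r (0,1) + Im v * r (0,\<i>)"
proof -
  interpret linear r using assms bounded_linear.linear by blast
  have "(u,v) = Re u *\<^sub>R (1,0) + Im u *\<^sub>R (\<i>,0) + Re v *\<^sub>R (0,1) + Im v *\<^sub>R (0,\<i>)"
    by (simp add: prod_eq_iff complex_eq_iff)
  then have "r (u,v) = r (Re u *\<^sub>R (1,0) + Im u *\<^sub>R (\<i>,0) + Re v *\<^sub>R (0,1) + Im v *\<^sub>R (0,\<i>))"
    by metis
  also have "\<dots> = Re u * r (1,0) + Im u * r (\<i>,0) + Re v * r (0,1) + Im v * r (0,\<i>)"
    by (simp only: add scale real_scaleR_def)
  finally show ?thesis .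
qed

lemma rpoly_TP: "real_polynomial_function r \<Longrightarrow> (\<lambda>x. complex_of_real (r (tor x))) \<in> TP"
proof (induction rule: real_polynomial_function.induct)
  case (linear r)
  have "(\<lambda>x. of_real (r (1,0)) * complex_of_real (cos (2 * pi * fst x)) + of_real (r (\<i>,0)) * complex_of_real (sin (2 * pi * fst x))
     + (of_real (r (0,1)) * complex_of_real (cos (2 * pi * snd x)) + of_real (r (0,\<i>)) * complex_of_real (sin (2 * pi * snd x)))) \<in> TP"
    by (intro TP_add TP_scale TP_cos1 TP_sin1 TP_cos2 TP_sin2)
  moreover have "(\<lambda>x. of_real (r (1,0)) * complex_of_real (cos (2 * pi * fst x)) + of_real (r (\<i>,0)) * complex_of_real (sin (2 * pi * fst x))
     + (of_real (r (0,1)) * complex_of_real (cos (2 * pi * snd x)) + of_real (r (0,\<i>)) * complex_of_real (sin (2 * pi * snd x))))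
     = (\<lambda>x. complex_of_real (r (tor x)))"
    by (rule ext, simp only: tor_def fst_conv snd_conv blin_decomp[OF linear, of "cis (2 * pi * fst _)" "cis (2 * pi * snd _)"], simp add: algebra_simps)
  ultimately show ?case by simp
next
  case (const c) then show ?case by (rule TP_const)
next
  case (add f g) then show ?case using TP_add by fastforce
next
  case (mult f g) then show ?case using TP_mult by fastforce
qed

lemma poly_TP:
  fixes p :: "complex \<times> complex \<Rightarrow> complex"
  assumes "polynomial_function p"
  shows "(\<lambda>x. p (tor x)) \<in> TP"
proof -
  have r1: "real_polynomial_function (\<lambda>y. Re (p y))" and r2: "real_polynomial_function (\<lambda>y. Im (p y))"
    using assms unfolding polynomial_function_iff_Basis_inner by (auto simp: Basis_complex_def)
  have "(\<lambda>x. complex_of_real (Re (p (tor x))) + \<i> * complex_of_real (Im (p (tor x)))) \<in> TP"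
    by (intro TP_add TP_scale rpoly_TP r1 r2)
  moreover have "(\<lambda>x. p (tor x)) = (\<lambda>x. complex_of_real (Re (p (tor x))) + \<i> * complex_of_real (Im (p (tor x))))"
    by (rule ext, rule complex_eq)
  ultimately show ?thesis by simp
qed

lemma cis_eq_int: "cis a = cis b \<Longrightarrow> \<exists>n::int. a = b + 2 * pi * of_int n"
proof -
  assume "cis a = cis b"
  then have "exp (\<i> * complex_of_real a) = exp (\<i> * complex_of_real b)" by (simp add: cis_conv_exp)
  then obtain n::int where "\<i> * complex_of_real a = \<i> * complex_of_real b + (of_int (2 * n) * pi) * \<i>"
    unfolding exp_eq by blast
  then have "Im (\<i> * complex_of_real a) = Im (\<i> * complex_of_real b + (of_int (2 * n) * pi) * \<i>)" by simp
  then have "a = b + 2 * pi * of_int n" by simp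
  then show ?thesis by blast
qed

lemma cis_unit_eq:
  assumes "0 \<le> s" "s \<le> 1" "0 \<le> s'" "s' \<le> 1" "cis (2 * pi * s) = cis (2 * pi * s')"
  shows "s = s' \<or> (s = 0 \<and> s' = 1) \<or> (s = 1 \<and> s' = 0)"
proof -
  obtain n::int where "2 * pi * s = 2 * pi * s' + 2 * pi * of_int n" using cis_eq_int[OF assms(5)] by blast
  then have "2 * pi * s = 2 * pi * (s' + of_int n)" by (simp add: distrib_left)
  then have e: "s = s' + of_int n" using pi_gt_zero by simp
  then have "of_int n \<le> (1::real)" "of_int n \<ge> (-1::real)" using assms by linarith+
  then have "n \<le> 1" "n \<ge> -1" by linarith+
  then have "n = 0 \<or> n = 1 \<or> n = -1" by linarith
  then show ?thesis using e assms by auto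
qed

lemma torus_approx:
  fixes G :: "real \<times> real \<Rightarrow> complex"
  assumes cont: "continuous_on UNIV G"
    and p1: "\<And>s t. G (s+1,t) = G (s,t)" and p2: "\<And>s t. G (s,t+1) = G (s,t)" and e: "e > 0"
  shows "\<exists>T\<in>TP. \<forall>x\<in>cbox (0,0) (1,1). norm (G x - T x) < e"
proof -
  define S :: "(real\<times>real) set" where "S = cbox (0,0) (1,1)"
  define K where "K = tor ` S"
  have cS: "compact S" unfolding S_def by simp
  have ctor: "continuous_on S tor" unfolding tor_def by (intro continuous_intros)
  have cK: "compact K" unfolding K_def using cS ctor compact_continuous_image by blast
  have memS: "x \<in> S \<longleftrightarrow> 0 \<le> fst x \<and> fst x \<le> 1 \<and> 0 \<le> snd x \<and> snd x \<le> 1" for x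
    unfolding S_def by (cases x) (auto simp: cbox_Pair_iff)
  have fib: "G x = G y" if "x \<in> S" "y \<in> S" "tor x = tor y" for x y
  proof -
    obtain s t where x: "x = (s,t)" by fastforce
    obtain s' t' where y: "y = (s',t')" by fastforce
    have h1: "s = s' \<or> (s = 0 \<and> s' = 1) \<or> (s = 1 \<and> s' = 0)"
      by (rule cis_unit_eq) (use that x y memS in \<open>auto simp: tor_def\<close>)
    have h2: "t = t' \<or> (t = 0 \<and> t' = 1) \<or> (t = 1 \<and> t' = 0)"
      by (rule cis_unit_eq) (use that x y memS in \<open>auto simp: tor_def\<close>)
    have "G (s,t) = G (s',t)" using h1 p1[of 0 t] by auto
    moreover have "G (s',t) = G (s',t')" using h2 p2[of s' 0] by auto
    ultimately show ?thesis using x y by simp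
  qed
  define g where "g y = G (SOME x. x \<in> S \<and> tor x = y)" for y
  have gtor: "g (tor x) = G x" if "x \<in> S" for x
  proof -
    have "\<exists>x'. x' \<in> S \<and> tor x' = tor x" using that by blast
    then have "(SOME x'. x' \<in> S \<and> tor x' = tor x) \<in> S \<and> tor (SOME x'. x' \<in> S \<and> tor x' = tor x) = tor x"
      by (rule someI_ex)
    then show ?thesis unfolding g_def using fib that by blast
  qed
  have cg: "continuous_on K g"
    unfolding continuous_openin_preimage_eq
  proof (intro allI impI)
    fix U :: "complex set" assume U: "open U"
    have k: "tor x \<in> K" "g (tor x) = G x" if "x \<in> S" for x using gtor that unfolding K_def by auto
    have eq: "S \<inter> tor -` (K \<inter> g -` U) = S \<inter> G -` U"
      by (rule set_eqI, case_tac "x \<in> S") (simp_all add: k)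
    have "openin (top_of_set S) (S \<inter> G -` U)"
      using continuous_on_subset[OF cont, of S] U continuous_openin_preimage_eq by blast
    then have "openin (top_of_set S) (S \<inter> tor -` (K \<inter> g -` U))" using eq by simp
    then show "openin (top_of_set K) (K \<inter> g -` U)"
      using Abstract_Topology_2.continuous_imp_quotient_map[OF ctor K_def[symmetric] cS, of "K \<inter> g -` U"] by blast
  qed
  obtain p where pp: "polynomial_function p" and pa: "\<forall>y\<in>K. norm (g y - p y) < e"
    using Stone_Weierstrass_polynomial_function[OF cK cg e] by blast
  show ?thesis
  proof (intro bexI ballI)
    show "(\<lambda>x. p (tor x)) \<in> TP" using poly_TP[OF pp] .
    fix x :: "real \<times> real" assume "x \<in> cbox (0,0) (1,1)"
    then have "x \<in> S" unfolding S_def .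
    then show "norm (G x - p (tor x)) < e" using pa gtor[of x] unfolding K_def by auto
  qed
qed

lemma integral_cmult_c:
  fixes f :: "'a::euclidean_space \<Rightarrow> complex"
  assumes "f integrable_on S"
  shows "integral S (\<lambda>x. c * f x) = c * integral S f"
  using integral_linear[OF assms bounded_linear_mult_right[of c]] by (simp add: o_def)

lemma per_int1:
  fixes F :: "real \<times> real \<Rightarrow> 'b"
  assumes p1: "\<And>s t. F (s+1,t) = F (s,t)"
  shows "F (s + of_int k, t) = F (s,t)"
proof -
  have n: "F (s + of_nat n, t) = F (s,t)" for n s
  proof (induction n arbitrary: s)
    case (Suc n)
    have "F (s + real (Suc n), t) = F ((s+1) + real n, t)" by (simp add: add_ac)
    also have "\<dots> = F (s+1, t)" by (rule Suc.IH)
    finally show ?case using p1 by simp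
  qed simp
  show ?thesis
  proof (cases "k \<ge> 0")
    case True then show ?thesis using n[of s "nat k"] by simp
  next
    case False
    then have "F ((s + of_int k) + of_nat (nat (-k)), t) = F (s + of_int k, t)" using n by blast
    then show ?thesis using False by simp
  qed
qed

lemma per_int2:
  fixes F :: "real \<times> real \<Rightarrow> 'b"
  assumes p2: "\<And>s t. F (s,t+1) = F (s,t)"
  shows "F (s, t + of_int k) = F (s,t)"
proof -
  have n: "F (s, t + of_nat n) = F (s,t)" for n t
  proof (induction n arbitrary: t)
    case (Suc n)
    have "F (s, t + real (Suc n)) = F (s, (t+1) + real n)" by (simp add: add_ac)
    also have "\<dots> = F (s, t+1)" by (rule Suc.IH)
    finally show ?case using p2 by simp
  qed simp
  show ?thesis
  proof (cases "k \<ge> 0")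
    case True then show ?thesis using n[of t "nat k"] by simp
  next
    case False
    then have "F (s, (t + of_int k) + of_nat (nat (-k))) = F (s, t + of_int k)" using n by blast
    then show ?thesis using False by simp
  qed
qed

lemma torus_complete:
  fixes F :: "real \<times> real \<Rightarrow> complex"
  assumes cont: "continuous_on UNIV F"
    and p1: "\<And>s t. F (s+1,t) = F (s,t)" and p2: "\<And>s t. F (s,t+1) = F (s,t)"
    and coef: "\<And>m n. integral (cbox (0,0) (1,1)) (\<lambda>x. F x * ek m n x) = 0"
  shows "F x = 0"
proof -
  define S :: "(real\<times>real) set" where "S = cbox (0,0) (1,1)"
  have cF: "continuous_on S F" using cont continuous_on_subset by blast
  have TPint: "integral S (\<lambda>x. F x * T x) = 0" if "T \<in> TP" for T
    using that
  proof (induction rule: TP.induct)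
    case (TP_ek m n) then show ?case using coef unfolding S_def by blast
  next
    case (TP_scale f c)
    have "(\<lambda>x. F x * f x) integrable_on S"
      unfolding S_def by (intro integrable_continuous continuous_intros TP_cont[OF TP_scale.hyps] cF[unfolded S_def])
    then have "integral S (\<lambda>x. c * (F x * f x)) = c * integral S (\<lambda>x. F x * f x)" by (rule integral_cmult_c)
    then show ?case using TP_scale.IH by (simp add: algebra_simps)
  next
    case (TP_add f g)
    have i1: "(\<lambda>x. F x * f x) integrable_on S"
      unfolding S_def by (intro integrable_continuous continuous_intros TP_cont[OF TP_add.hyps(1)] cF[unfolded S_def])
    have i2: "(\<lambda>x. F x * g x) integrable_on S"
      unfolding S_def by (intro integrable_continuous continuous_intros TP_cont[OF TP_add.hyps(2)] cF[unfolded S_def])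
    have "integral S (\<lambda>x. F x * f x + F x * g x) = 0" using integral_add[OF i1 i2] TP_add.IH by simp
    then show ?case by (simp add: algebra_simps)
  qed
  obtain M where M: "\<And>x. x \<in> S \<Longrightarrow> norm (F x) \<le> M" "M \<ge> 0"
  proof -
    have "compact (F ` S)" by (rule compact_continuous_image[OF cF]) (simp add: S_def)
    then obtain M0 where "\<forall>y\<in>F ` S. norm y \<le> M0" using compact_imp_bounded bounded_iff by metis
    then show ?thesis using that[of "max M0 0"] by fastforce
  qed
  define I where "I = integral S (\<lambda>x. F x * cnj (F x))"
  have Ibound: "norm I \<le> M * e" if e: "e > 0" for e
  proof -
    have cG: "continuous_on UNIV (\<lambda>x. cnj (F x))" by (intro continuous_intros cont)
    obtain T where T: "T \<in> TP" "\<forall>x\<in>cbox (0,0) (1,1). norm (cnj (F x) - T x) < e"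
      using torus_approx[OF cG _ _ e] p1 p2 by auto
    have i1: "(\<lambda>x. F x * (cnj (F x) - T x)) integrable_on S"
      unfolding S_def by (intro integrable_continuous continuous_intros TP_cont[OF T(1)] cF[unfolded S_def])
    have i2: "(\<lambda>x. F x * T x) integrable_on S"
      unfolding S_def by (intro integrable_continuous continuous_intros TP_cont[OF T(1)] cF[unfolded S_def])
    have "I = integral S (\<lambda>x. F x * (cnj (F x) - T x) + F x * T x)"
      unfolding I_def by (simp add: algebra_simps)
    also have "\<dots> = integral S (\<lambda>x. F x * (cnj (F x) - T x))"
      using integral_add[OF i1 i2] TPint[OF T(1)] by simp
    finally have Ieq: "I = integral S (\<lambda>x. F x * (cnj (F x) - T x))" .
    have "norm I \<le> (M * e) * Henstock_Kurzweil_Integration.content S"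
      unfolding Ieq S_def
    proof (rule has_integral_bound)
      show "0 \<le> M * e" using M(2) e by simp
      show "((\<lambda>x. F x * (cnj (F x) - T x)) has_integral integral (cbox (0,0) (1,1)) (\<lambda>x. F x * (cnj (F x) - T x))) (cbox (0,0) (1,1))"
        using i1 unfolding S_def by (simp add: integrable_integral)
      fix x :: "real \<times> real" assume x: "x \<in> cbox (0,0) (1,1)"
      have "norm (F x * (cnj (F x) - T x)) = norm (F x) * norm (cnj (F x) - T x)" by (simp add: norm_mult)
      also have "\<dots> \<le> M * e" using M x T(2) unfolding S_def
        by (intro mult_mono) (auto intro: less_imp_le)
      finally show "norm (F x * (cnj (F x) - T x)) \<le> M * e" .
    qed
    moreover have "Henstock_Kurzweil_Integration.content S = 1" unfolding S_def by (simp add: content_Pair)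
    ultimately show ?thesis by simp
  qed
  have I0: "I = 0"
  proof (rule ccontr)
    assume "I \<noteq> 0"
    then have np: "norm I > 0" by simp
    define e where "e = norm I / (2 * (M + 1))"
    have ep: "e > 0" unfolding e_def using np M(2) by simp
    have "M * e < norm I" unfolding e_def using np M(2)
      by (simp add: field_simps) (metis add_nonneg_pos mult_nonneg_nonneg norm_ge_zero np mult_pos_pos zero_less_numeral)
    then show False using Ibound[OF ep] by simp
  qed
  have cn: "continuous_on S (\<lambda>x. (norm (F x))\<^sup>2)" by (intro continuous_intros cF)
  have "Re I = integral S (\<lambda>x. Re (F x * cnj (F x)))"
    unfolding I_def using integral_linear[OF _ bounded_linear_Re, of "\<lambda>x. F x * cnj (F x)" S]
      integrable_continuous[of "(0,0)" "(1,1)" "\<lambda>x. F x * cnj (F x)"] cF unfolding S_def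
    by (simp add: o_def continuous_intros)
  then have "integral S (\<lambda>x. (norm (F x))\<^sup>2) = 0" using I0 by (simp add: complex_mult_cnj cmod_power2)
  then have hi: "((\<lambda>x. (norm (F x))\<^sup>2) has_integral 0) S"
    using integrable_continuous[of "(0,0)" "(1,1)" "\<lambda>x. (norm (F x))\<^sup>2"] cn unfolding S_def
    by (metis integrable_integral)
  have zS: "F y = 0" if "y \<in> S" for y
  proof -
    have "(\<lambda>x. (norm (F x))\<^sup>2) y = 0"
      using has_integral_0_cbox_imp_0[of "(0,0)" "(1,1)" "\<lambda>x. (norm (F x))\<^sup>2" y] cn hi that
      unfolding S_def by (auto simp: box_ne_empty Basis_prod_def)
    then show ?thesis by simp
  qed
  obtain s t where x: "x = (s,t)" by fastforce
  have "F (s,t) = F (s - of_int (floor s), t)" using per_int1[OF p1, of "s - of_int (floor s)" "floor s" t] by simp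
  also have "\<dots> = F (s - of_int (floor s), t - of_int (floor t))"
    using per_int2[OF p2, of "s - of_int (floor s)" "t - of_int (floor t)" "floor t"] by simp
  also have "\<dots> = 0"
    by (rule zS) (auto simp: S_def cbox_Pair_iff less_imp_le, linarith+)
  finally show ?thesis using x by simp
qed




lemma exp_2pii_int:
  fixes x :: real assumes "x \<in> \<int>"
  shows "exp (2 * of_real pi * \<i> * complex_of_real x) = 1"
  using exp_integer_2pi[OF assms] by (simp add: mult_ac)

lemma int01_exp:
  fixes q :: int
  shows "integral {0..1} (\<lambda>t::real. exp (2 * of_real pi * \<i> * (of_int q * of_real t))) = (if q = 0 then 1 else 0)"
proof (cases "q = 0")
  case True then show ?thesis by simp
next
  case False
  define c where "c = 2 * of_real pi * \<i> * (of_int q :: complex)"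
  have c0: "c \<noteq> 0" unfolding c_def using False by simp
  have "((\<lambda>t::real. exp (c * of_real t)) has_integral (exp (c * of_real 1) / c - exp (c * of_real 0) / c)) {0..1}"
  proof (rule fundamental_theorem_of_calculus)
    fix t :: real assume "t \<in> {0..1}"
    have "((\<lambda>t::real. exp (c * of_real t) / c) has_vector_derivative (exp (c * of_real t) * c) / c) (at t within {0..1})"
      by (auto intro!: derivative_eq_intros has_vector_derivative_real_field)
    then show "((\<lambda>t::real. exp (c * of_real t) / c) has_vector_derivative exp (c * of_real t)) (at t within {0..1})"
      using c0 by simp
  qed simp
  moreover have "exp (c * of_real 1) = 1" unfolding c_def
    using exp_2pii_int[of "of_int q"] by (simp add: mult_ac)
  ultimately have "((\<lambda>t::real. exp (c * of_real t)) has_integral 0) {0..1}" by simp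
  then show ?thesis using False unfolding c_def by (simp add: integral_unique algebra_simps)
qed

lemma integrable_exp01: "(\<lambda>t::real. exp (2 * of_real pi * \<i> * (of_int q * of_real t))) integrable_on {0..1}"
  by (intro integrable_continuous_interval continuous_intros)

lemma int_ek: "integral (cbox (0,0) (1,1)) (ek p q) = (if p = 0 \<and> q = 0 then 1 else 0)"
proof -
  have c: "continuous_on (cbox (0,0) (1,1)) (ek p q)" by (rule continuous_ek)
  have sp: "ek p q (s,t) = exp (2 * of_real pi * \<i> * (of_int p * of_real s)) * exp (2 * of_real pi * \<i> * (of_int q * of_real t))" for s t
    unfolding ek_def by (simp add: exp_add[symmetric] algebra_simps)
  have "integral (cbox (0,0) (1,1)) (ek p q) = integral (cbox 0 1) (\<lambda>s. integral (cbox 0 1) (\<lambda>t. ek p q (s,t)))"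
    by (rule integral_prod_continuous[OF c])
  also have "\<dots> = integral {0..1} (\<lambda>s. exp (2 * of_real pi * \<i> * (of_int p * of_real s)) * (if q = 0 then 1 else 0))"
    unfolding sp cbox_interval
    by (intro integral_cong) (simp add: integral_cmult_c[OF integrable_exp01] int01_exp)
  also have "\<dots> = (if p = 0 \<and> q = 0 then 1 else 0)"
    by (cases "q = 0") (simp_all add: int01_exp)
  finally show ?thesis .
qed




lemma ibp_dir:
  fixes G :: "complex \<Rightarrow> complex"
  assumes D: "\<And>z. (G has_derivative DG z) (at z)"
    and C: "\<And>v. continuous_on UNIV (\<lambda>z. DG z v)"
    and P: "\<And>z. G (z + u) = G z"
    and L: "\<And>s t. Lf (s,t) = p s + of_real t * u"
    and pc: "\<And>s t. ((\<lambda>t. Lf (s,t)) has_vector_derivative u) (at t)"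
  shows "integral {0..1} (\<lambda>t. DG (Lf (s,t)) u) = 0"
proof -
  have "((\<lambda>t. DG (Lf (s,t)) u) has_integral (G (Lf (s,1)) - G (Lf (s,0)))) {0..1}"
  proof (rule fundamental_theorem_of_calculus)
    fix t :: real assume "t \<in> {0..1}"
    have lin: "linear (DG z)" for z using D has_derivative_linear by blast
    have "((G \<circ> (\<lambda>t. Lf (s,t))) has_derivative (DG (Lf (s,t)) \<circ> (\<lambda>h. h *\<^sub>R u))) (at t within {0..1})"
    proof -
      have A: "((\<lambda>t. Lf (s,t)) has_derivative (\<lambda>h. h *\<^sub>R u)) (at t within {0..1})"
        using pc[of s t] unfolding has_vector_derivative_def by (rule has_derivative_at_withinI)
      have B: "(G has_derivative DG (Lf (s,t))) (at (Lf (s,t)) within (\<lambda>t. Lf (s,t)) ` {0..1})"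
        using D has_derivative_at_withinI by blast
      show ?thesis using diff_chain_within[OF A B] .
    qed
    moreover have "(DG (Lf (s,t)) \<circ> (\<lambda>h. h *\<^sub>R u)) = (\<lambda>h. h *\<^sub>R DG (Lf (s,t)) u)"
      using lin[of "Lf (s,t)"] by (auto simp: o_def linear_scale)
    ultimately have "((G \<circ> (\<lambda>t. Lf (s,t))) has_vector_derivative DG (Lf (s,t)) u) (at t within {0..1})"
      unfolding has_vector_derivative_def by simp
    then show "((\<lambda>t. G (Lf (s,t))) has_vector_derivative DG (Lf (s,t)) u) (at t within {0..1})"
      by (simp add: o_def)
  qed simp
  moreover have "G (Lf (s,1)) = G (Lf (s,0))" using P[of "p s"] L[of s 1] L[of s 0] by simp
  ultimately show ?thesis by (simp add: integral_unique)
qed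

locale lat =
  fixes w1 w2 :: complex
  assumes w12: "Im (cnj w1 * w2) \<noteq> 0"
begin

definition Lc :: "real \<times> real \<Rightarrow> complex" where
  "Lc x = of_real (fst x) * w1 + of_real (snd x) * w2"

lemma continuous_Lc: "continuous_on S Lc"
  unfolding Lc_def by (intro continuous_intros)

lemma decomp: "v = of_real (Im (cnj v * w2) / Im (cnj w1 * w2)) * w1 + of_real (Im (cnj w1 * v) / Im (cnj w1 * w2)) * w2"
proof -
  define d where "d = Im (cnj w1 * w2)"
  have d: "d \<noteq> 0" using w12 d_def by simp
  define a where "a = Im (cnj v * w2)"
  define b where "b = Im (cnj w1 * v)"
  have r: "Re v * d = a * Re w1 + b * Re w2"
    unfolding d_def a_def b_def by (simp add: algebra_simps)
  have i: "Im v * d = a * Im w1 + b * Im w2"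
    unfolding d_def a_def b_def by (simp add: algebra_simps)
  have r': "Re v = (a / d) * Re w1 + (b / d) * Re w2"
  proof -
    have "Re v = (Re v * d) / d" using d by simp
    also have "\<dots> = (a * Re w1 + b * Re w2) / d" using r by simp
    finally show ?thesis by (simp add: add_divide_distrib)
  qed
  have i': "Im v = (a / d) * Im w1 + (b / d) * Im w2"
  proof -
    have "Im v = (Im v * d) / d" using d by simp
    also have "\<dots> = (a * Im w1 + b * Im w2) / d" using i by simp
    finally show ?thesis by (simp add: add_divide_distrib)
  qed
  have "v = of_real (a / d) * w1 + of_real (b / d) * w2"
    by (rule complex_eqI) (simp only: r' i' Re_complex_of_real plus_complex.sel times_complex.sel Im_complex_of_real, simp)+
  then show ?thesis unfolding a_def b_def d_def .
qed

lemma ibp0: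
  fixes G :: "complex \<Rightarrow> complex"
  assumes D: "\<And>z. (G has_derivative DG z) (at z)"
    and C: "\<And>v. continuous_on UNIV (\<lambda>z. DG z v)"
    and P1: "\<And>z. G (z + w1) = G z" and P2: "\<And>z. G (z + w2) = G z"
  shows "integral (cbox (0,0) (1,1)) (\<lambda>x. DG (Lc x) v) = 0"
proof -
  have lin: "linear (DG z)" for z using D has_derivative_linear by blast
  have cc: "continuous_on (cbox (0,0) (1,1)) (\<lambda>x. DG (Lc x) u)" for u
    by (rule continuous_on_compose2[OF C continuous_Lc]) auto
  have i2: "integral (cbox (0,0) (1,1)) (\<lambda>x. DG (Lc x) w2) = 0"
  proof -
    have "integral (cbox (0,0) (1,1)) (\<lambda>x. DG (Lc x) w2) = integral (cbox 0 1) (\<lambda>s. integral (cbox 0 1) (\<lambda>t. DG (Lc (s,t)) w2))"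
      by (rule integral_prod_continuous[OF cc])
    also have "\<dots> = 0"
    proof -
      have "integral {0..1} (\<lambda>t. DG (Lc (s,t)) w2) = 0" for s
      proof (rule ibp_dir[OF D C P2, where p = "\<lambda>s. of_real s * w1" and Lf = Lc])
        show "Lc (s,t) = of_real s * w1 + of_real t * w2" for s t by (simp add: Lc_def)
        show "((\<lambda>t. Lc (s, t)) has_vector_derivative w2) (at t)" for s t
          unfolding Lc_def by (auto intro!: derivative_eq_intros has_vector_derivative_real_field simp: fst_conv snd_conv)
      qed
      then show ?thesis by (simp add: cbox_interval)
    qed
    finally show ?thesis .
  qed
  have i1: "integral (cbox (0,0) (1,1)) (\<lambda>x. DG (Lc x) w1) = 0"
  proof -
    have cc': "continuous_on (cbox (0,0) (1,1)) (\<lambda>(s,t). DG (Lc (s,t)) w1)" using cc[of w1] by (simp add: case_prod_beta')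
    have "integral (cbox (0,0) (1,1)) (\<lambda>x. DG (Lc x) w1) = integral (cbox 0 1) (\<lambda>s. integral (cbox 0 1) (\<lambda>t. DG (Lc (s,t)) w1))"
      by (rule integral_prod_continuous[OF cc])
    also have "\<dots> = integral (cbox 0 1) (\<lambda>t. integral (cbox 0 1) (\<lambda>s. DG (Lc (s,t)) w1))"
      by (rule integral_swap_continuous[OF cc'])
    also have "\<dots> = 0"
    proof -
      have "integral {0..1} (\<lambda>s. DG (Lc (s,t)) w1) = 0" for t
      proof -
        have "integral {0..1} (\<lambda>s. DG ((\<lambda>x. Lc (snd x, fst x)) (t,s)) w1) = 0"
          by (rule ibp_dir[OF D C P1, where p = "\<lambda>t. of_real t * w2" and Lf = "\<lambda>x. Lc (snd x, fst x)"])
             (auto simp: Lc_def intro!: derivative_eq_intros has_vector_derivative_real_field)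
        then show ?thesis by simp
      qed
      then show ?thesis by (simp add: cbox_interval)
    qed
    finally show ?thesis .
  qed
  define a where "a = Im (cnj v * w2) / Im (cnj w1 * w2)"
  define b where "b = Im (cnj w1 * v) / Im (cnj w1 * w2)"
  have v: "v = a *\<^sub>R w1 + b *\<^sub>R w2" using decomp[of v] unfolding a_def b_def by (simp add: scaleR_conv_of_real)
  have "DG z v = a *\<^sub>R DG z w1 + b *\<^sub>R DG z w2" for z
    using lin[of z] v by (simp add: linear_add linear_scale)
  then have "integral (cbox (0,0) (1,1)) (\<lambda>x. DG (Lc x) v) = integral (cbox (0,0) (1,1)) (\<lambda>x. a *\<^sub>R DG (Lc x) w1 + b *\<^sub>R DG (Lc x) w2)"
    by simp
  also have "\<dots> = a *\<^sub>R integral (cbox (0,0) (1,1)) (\<lambda>x. DG (Lc x) w1) + b *\<^sub>R integral (cbox (0,0) (1,1)) (\<lambda>x. DG (Lc x) w2)"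
  proof -
    have ii: "(\<lambda>x. c *\<^sub>R DG (Lc x) u) integrable_on cbox (0,0) (1,1)" for u c
      by (intro integrable_cmul integrable_continuous cc)
    show ?thesis by (subst integral_add[OF ii ii]) simp
  qed
  also have "\<dots> = 0" using i1 i2 by simp
  finally show ?thesis .
qed

end




locale setting = lat +
  fixes \<Gamma> :: "complex set" and \<beta>0 A B :: complex
  assumes Gam: "\<Gamma> = {of_int m * w1 + of_int n * w2 | m n. True}"
    and b_dual: "\<beta>0 \<in> dual_lattice \<Gamma>" and b_nz: "\<beta>0 \<noteq> 0" and A_nz: "A \<noteq> 0"
begin

definition EE :: "complex \<Rightarrow> complex \<Rightarrow> complex" where
  "EE C z = 2 * of_real pi * (of_real (A \<bullet> z) - \<i> * of_real (C \<bullet> z))"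

definition cf :: "(complex \<Rightarrow> complex) \<Rightarrow> complex \<Rightarrow> complex" where
  "cf w C = integral (cbox (0,0) (1,1)) (\<lambda>x. w (Lc x) * exp (- EE C (Lc x)))"

definition Cs :: "complex set" where "Cs = {C. C - B \<in> dual_lattice \<Gamma>}"

lemma of_int_mult_scaleR: "(complex_of_int m * w) = real_of_int m *\<^sub>R w" by (simp add: scaleR_conv_of_real)

lemma w1_in: "w1 \<in> \<Gamma>" unfolding Gam by (rule CollectI, rule exI[of _ 1], rule exI[of _ 0]) simp
lemma w2_in: "w2 \<in> \<Gamma>" unfolding Gam by (rule CollectI, rule exI[of _ 0], rule exI[of _ 1]) simp

lemma inner_Lc: "\<xi> \<bullet> Lc x = fst x * (\<xi> \<bullet> w1) + snd x * (\<xi> \<bullet> w2)"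
  unfolding Lc_def by (simp add: inner_add_right scaleR_conv_of_real[symmetric])

lemma dual_int: "\<xi> \<in> dual_lattice \<Gamma> \<Longrightarrow> \<xi> \<bullet> w1 \<in> \<int> \<and> \<xi> \<bullet> w2 \<in> \<int>"
  unfolding dual_lattice_def using w1_in w2_in by blast

lemma dual_mem: assumes "\<xi> \<bullet> w1 \<in> \<int>" "\<xi> \<bullet> w2 \<in> \<int>" shows "\<xi> \<in> dual_lattice \<Gamma>"
  unfolding dual_lattice_def
proof (intro CollectI ballI)
  fix \<gamma> assume "\<gamma> \<in> \<Gamma>"
  then obtain m n :: int where g: "\<gamma> = of_int m * w1 + of_int n * w2" unfolding Gam by blast
  have "\<xi> \<bullet> \<gamma> = of_int m * (\<xi> \<bullet> w1) + of_int n * (\<xi> \<bullet> w2)"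
    unfolding g by (simp add: inner_add_right of_int_mult_scaleR)
  then show "\<xi> \<bullet> \<gamma> \<in> \<int>" using assms by simp
qed

lemma dual_diff: "a \<in> dual_lattice \<Gamma> \<Longrightarrow> b \<in> dual_lattice \<Gamma> \<Longrightarrow> a - b \<in> dual_lattice \<Gamma>"
  unfolding dual_lattice_def by (auto simp: inner_diff_left)
lemma dual_add: "a \<in> dual_lattice \<Gamma> \<Longrightarrow> b \<in> dual_lattice \<Gamma> \<Longrightarrow> a + b \<in> dual_lattice \<Gamma>"
  unfolding dual_lattice_def by (auto simp: inner_add_left)
lemma dual_neg: "a \<in> dual_lattice \<Gamma> \<Longrightarrow> - a \<in> dual_lattice \<Gamma>"
  unfolding dual_lattice_def by auto
lemma dual_0: "0 \<in> dual_lattice \<Gamma>"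
  unfolding dual_lattice_def by auto

lemma dual_exists: "\<exists>\<xi>. \<xi> \<bullet> w1 = of_int m \<and> \<xi> \<bullet> w2 = of_int n"
proof -
  define d where "d = Im (cnj w1 * w2)"
  have d: "d \<noteq> 0" using w12 d_def by simp
  define \<xi> where "\<xi> = (of_int m * (- \<i> * w2) + of_int n * (\<i> * w1)) / of_real d"
  have "\<xi> \<bullet> w1 = of_int m"
    unfolding \<xi>_def using d d_def by (simp add: inner_complex_def field_simps, algebra)
  moreover have "\<xi> \<bullet> w2 = of_int n"
    unfolding \<xi>_def using d d_def by (simp add: inner_complex_def field_simps, algebra)
  ultimately
  show ?thesis by blast
qed

lemma dual_zero: assumes "\<xi> \<bullet> w1 = 0" "\<xi> \<bullet> w2 = 0" shows "\<xi> = 0"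
proof -
  define d where "d = Im (cnj w1 * w2)"
  have d: "d \<noteq> 0" using w12 d_def by simp
  have "Re \<xi> * d = Im w2 * (\<xi> \<bullet> w1) - Im w1 * (\<xi> \<bullet> w2)"
    unfolding d_def by (simp add: inner_complex_def algebra_simps)
  moreover have "Im \<xi> * d = Re w1 * (\<xi> \<bullet> w2) - Re w2 * (\<xi> \<bullet> w1)"
    unfolding d_def by (simp add: inner_complex_def algebra_simps)
  ultimately show ?thesis using assms d by (simp add: complex_eq_iff)
qed

lemma Lc_surj: "\<exists>x. z = Lc x"
  using decomp[of z] unfolding Lc_def by (metis fst_conv snd_conv)

lemma EE_add: "EE C (z1 + z2) = EE C z1 + EE C z2"
  unfolding EE_def by (simp add: inner_add_right algebra_simps)

lemma EE_minus: "EE C (- z) = - EE C z"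
  unfolding EE_def by (simp add: algebra_simps)

lemma EE_scale: "EE C (r *\<^sub>R z) = of_real r * EE C z"
  unfolding EE_def by (simp add: algebra_simps)

lemma bl_EE: "bounded_linear (EE C)"
  unfolding EE_def by (intro bounded_linear_intros bounded_linear_compose[OF bounded_linear_of_real bounded_linear_inner_right])

lemma EE_diffC: "EE C z - EE C' z = - 2 * of_real pi * \<i> * of_real ((C - C') \<bullet> z)"
  unfolding EE_def by (simp add: inner_diff_left algebra_simps)

lemma exp_EE_gam:
  assumes "C \<in> Cs" "\<gamma> \<in> \<Gamma>"
  shows "exp (EE C \<gamma>) = hAB A B \<gamma>"
proof -
  have i: "(C - B) \<bullet> \<gamma> \<in> \<int>" using assms unfolding Cs_def dual_lattice_def by blast
  have "EE C \<gamma> = 2 * of_real pi * (of_real (A \<bullet> \<gamma>) - \<i> * of_real (B \<bullet> \<gamma>)) + (- (2 * of_real pi * \<i> * of_real ((C - B) \<bullet> \<gamma>)))"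
    unfolding EE_def by (simp add: inner_diff_left algebra_simps)
  then have "exp (EE C \<gamma>) = hAB A B \<gamma> * exp (- (2 * of_real pi * \<i> * of_real ((C - B) \<bullet> \<gamma>)))"
    unfolding hAB_def by (simp add: exp_add exp_diff exp_minus divide_inverse)
  also have "\<dots> = hAB A B \<gamma>" using exp_2pii_int[OF i] by (simp add: exp_minus)
  finally show ?thesis .
qed

lemma exp_EE_shift:
  assumes "C \<in> Cs" "\<gamma> \<in> \<Gamma>"
  shows "exp (EE C (z + \<gamma>)) = exp (EE C z) * hAB A B \<gamma>"
  using exp_EE_gam[OF assms] by (simp add: EE_add exp_add)

lemma B_Cs: "B \<in> Cs" unfolding Cs_def using dual_0 by simp

lemma coef_zero_imp:
  assumes cw: "continuous_on UNIV w"
    and qp: "\<And>z \<gamma>. \<gamma> \<in> \<Gamma> \<Longrightarrow> w (z + \<gamma>) = w z * hAB A B \<gamma>"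
    and cz: "\<And>C. C \<in> Cs \<Longrightarrow> cf w C = 0"
  shows "w z = 0"
proof -
  define F where "F x = w (Lc x) * exp (- EE B (Lc x))" for x
  have cF: "continuous_on UNIV F" unfolding F_def
    by (intro continuous_intros continuous_on_compose2[OF cw continuous_Lc] continuous_on_compose2[OF linear_continuous_on[OF bl_EE] continuous_Lc]) auto
  have per: "F x = F y" if "Lc y = Lc x + \<gamma>" "\<gamma> \<in> \<Gamma>" for x y \<gamma>
  proof -
    have "F y = w (Lc x) * hAB A B \<gamma> * exp (- EE B (Lc x + \<gamma>))" unfolding F_def that(1) qp[OF that(2)] ..
    also have "exp (- EE B (Lc x + \<gamma>)) = exp (- EE B (Lc x)) / hAB A B \<gamma>"
      using exp_EE_shift[OF B_Cs that(2), of "Lc x"] by (simp add: exp_minus divide_inverse)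
    finally show ?thesis unfolding F_def by (simp add: hAB_def)
  qed
  have p1: "F (s+1,t) = F (s,t)" for s t by (rule sym, rule per[OF _ w1_in]) (simp add: Lc_def algebra_simps)
  have p2: "F (s,t+1) = F (s,t)" for s t by (rule sym, rule per[OF _ w2_in]) (simp add: Lc_def algebra_simps)
  have co: "integral (cbox (0,0) (1,1)) (\<lambda>x. F x * ek m n x) = 0" for m n
  proof -
    obtain \<xi> where \<xi>: "\<xi> \<bullet> w1 = of_int m" "\<xi> \<bullet> w2 = of_int n" using dual_exists by blast
    have C: "B + \<xi> \<in> Cs" unfolding Cs_def using dual_mem[of \<xi>] \<xi> by simp
    have "F x * ek m n x = w (Lc x) * exp (- EE (B + \<xi>) (Lc x))" for x
    proof -
      have "- EE (B + \<xi>) (Lc x) = - EE B (Lc x) + 2 * of_real pi * \<i> * (of_int m * of_real (fst x) + of_int n * of_real (snd x))"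
        unfolding EE_def by (simp add: inner_add_left inner_Lc \<xi> algebra_simps)
      then show ?thesis unfolding F_def ek_def by (simp add: exp_add[symmetric])
    qed
    then show ?thesis using cz[OF C] unfolding cf_def by simp
  qed
  obtain x where x: "z = Lc x" using Lc_surj by blast
  have "F x = 0" by (rule torus_complete[OF cF p1 p2 co])
  then show ?thesis unfolding F_def x by simp
qed

end




definition wpq :: "quat \<Rightarrow> complex" where "wpq q = fst q + \<i> * cnj (snd q)"
definition wmq :: "quat \<Rightarrow> complex" where "wmq q = fst q - \<i> * cnj (snd q)"

lemma wpq_add: "wpq (a + b) = wpq a + wpq b" by (simp add: wpq_def algebra_simps)
lemma wmq_add: "wmq (a + b) = wmq a + wmq b" by (simp add: wmq_def algebra_simps)
lemma wpq_scaleR: "wpq (r *\<^sub>R a) = of_real r * wpq a" by (simp add: wpq_def algebra_simps scaleR_conv_of_real)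
lemma wmq_scaleR: "wmq (r *\<^sub>R a) = of_real r * wmq a" by (simp add: wmq_def algebra_simps scaleR_conv_of_real)
lemma wpq_0: "wpq 0 = 0" by (simp add: wpq_def)
lemma wmq_0: "wmq 0 = 0" by (simp add: wmq_def)
lemma wpq_qc: "wpq (qmul a (qc c)) = wpq a * c" by (simp add: wpq_def qmul_def qc_def algebra_simps)
lemma wmq_qc: "wmq (qmul a (qc c)) = wmq a * c" by (simp add: wmq_def qmul_def qc_def algebra_simps)

lemma quat_rec: "q = ((wpq q + wmq q) / 2, cnj ((wpq q - wmq q) / (2 * \<i>)))"
  by (simp add: wpq_def wmq_def prod_eq_iff field_simps)

lemma wq_inj: "wpq a = wpq b \<Longrightarrow> wmq a = wmq b \<Longrightarrow> a = b"
  by (metis quat_rec)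

lemma wpq_rec: "wpq ((p + m) / 2, cnj ((p - m) / (2 * \<i>))) = p"
  by (simp add: wpq_def field_simps)
lemma wmq_rec: "wmq ((p + m) / 2, cnj ((p - m) / (2 * \<i>))) = m"
  by (simp add: wmq_def field_simps)

lemma wpq_N: "wpq (qmul (qmul (qexpj b) (qc \<i>)) X) = \<i> * exp (\<i> * of_real b) * wmq X"
  by (simp add: wpq_def wmq_def qmul_def qexpj_def qc_def cis_conv_exp[symmetric] complex_eq_iff algebra_simps)

lemma wmq_N: "wmq (qmul (qmul (qexpj b) (qc \<i>)) X) = \<i> * exp (- (\<i> * of_real b)) * wpq X"
proof -
  have "exp (- (\<i> * of_real b)) = cis (-b)" by (simp add: cis_conv_exp)
  then show ?thesis
    by (simp add: wpq_def wmq_def qmul_def qexpj_def qc_def complex_eq_iff algebra_simps)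
qed

lemma holo_point:
  "U = qmul (qmul (qexpj b) (qc \<i>)) X \<longleftrightarrow>
     (wpq U = \<i> * exp (\<i> * of_real b) * wmq X \<and> wmq U = \<i> * exp (- (\<i> * of_real b)) * wpq X)"
  using wq_inj[of U "qmul (qmul (qexpj b) (qc \<i>)) X"] wpq_N wmq_N by metis




lemma bl_wpq: "bounded_linear wpq"
  unfolding wpq_def by (intro bounded_linear_intros bounded_linear_compose[OF bounded_linear_cnj bounded_linear_snd])
lemma bl_wmq: "bounded_linear wmq"
  unfolding wmq_def by (intro bounded_linear_intros bounded_linear_compose[OF bounded_linear_cnj bounded_linear_snd])

lemma has_derivative_exp_neg:
  fixes E :: "complex \<Rightarrow> complex"
  assumes "bounded_linear E"
  shows "((\<lambda>z. exp (- E z)) has_derivative (\<lambda>h. exp (- E z) * (- E h))) (at z)"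
proof -
  have e: "((\<lambda>z. - E z) has_derivative (\<lambda>h. - E h)) (at z)"
    using bounded_linear.has_derivative[OF assms has_derivative_ident] by (intro has_derivative_minus) simp
  have "(exp has_derivative (\<lambda>h. h * exp (- E z))) (at (- E z))"
  proof -
    have "(\<lambda>h. h * exp (- E z)) = (*) (exp (- E z))" by (auto simp: mult.commute)
    then show ?thesis using DERIV_exp[of "- E z"] by (simp add: has_field_derivative_def)
  qed
  from has_derivative_compose[OF e this] show ?thesis by (simp add: mult.commute)
qed

lemma integral_cmult_u:
  fixes f :: "'a::euclidean_space \<Rightarrow> complex"
  shows "integral S (\<lambda>x. c * f x) = c * integral S f"
proof (cases "c = 0 \<or> f integrable_on S")
  case True then show ?thesis using integral_cmult_c by auto
next
  case False
  have "\<not> (\<lambda>x. c * f x) integrable_on S"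
  proof
    assume "(\<lambda>x. c * f x) integrable_on S"
    then have "(\<lambda>x. inverse c * (c * f x)) integrable_on S"
      using integrable_linear[OF _ bounded_linear_mult_right[of "inverse c"]] by (auto simp: o_def)
    then show False using False by simp
  qed
  then show ?thesis using False by (simp add: not_integrable_integral)
qed

context setting
begin

lemma ibp_cf:
  fixes w :: "complex \<Rightarrow> complex"
  assumes dw: "\<And>z. (w has_derivative Dw z) (at z)"
    and cdw: "\<And>v. continuous_on UNIV (\<lambda>z. Dw z v)"
    and qp: "\<And>z \<gamma>. \<gamma> \<in> \<Gamma> \<Longrightarrow> w (z + \<gamma>) = w z * hAB A B \<gamma>"
    and C: "C \<in> Cs"
  shows "integral (cbox (0,0) (1,1)) (\<lambda>x. Dw (Lc x) v * exp (- EE C (Lc x))) = EE C v * cf w C"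
proof -
  define G where "G z = w z * exp (- EE C z)" for z
  define DG where "DG z h = w z * (exp (- EE C z) * (- EE C h)) + Dw z h * exp (- EE C z)" for z h
  have dG: "(G has_derivative DG z) (at z)" for z
    unfolding G_def DG_def by (rule has_derivative_mult[OF dw has_derivative_exp_neg[OF bl_EE]])
  have cw: "continuous_on UNIV w"
    using dw by (meson continuous_at_imp_continuous_on has_derivative_continuous)
  have cE: "continuous_on UNIV (\<lambda>z. exp (- EE C z))"
    by (intro continuous_intros linear_continuous_on[OF bl_EE])
  have cdG: "continuous_on UNIV (\<lambda>z. DG z h)" for h
    unfolding DG_def by (intro continuous_intros cw cE cdw)
  have per: "G (z + \<gamma>) = G z" if "\<gamma> \<in> \<Gamma>" for z \<gamma>
  proof -
    have "exp (- EE C (z + \<gamma>)) = exp (- EE C z) / hAB A B \<gamma>"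
      using exp_EE_shift[OF C that, of z] by (simp add: exp_minus divide_inverse)
    then show ?thesis unfolding G_def qp[OF that] by (simp add: hAB_def)
  qed
  have z: "integral (cbox (0,0) (1,1)) (\<lambda>x. DG (Lc x) v) = 0"
    by (rule ibp0[OF dG cdG]) (simp_all add: per w1_in w2_in)
  have ic: "continuous_on (cbox (0,0) (1,1)) (\<lambda>x. f (Lc x))" if "continuous_on UNIV f" for f :: "complex \<Rightarrow> complex"
    by (rule continuous_on_compose2[OF that continuous_Lc]) auto
  have i1: "(\<lambda>x. w (Lc x) * exp (- EE C (Lc x)) * (- EE C v)) integrable_on cbox (0,0) (1,1)"
    by (intro integrable_continuous ic continuous_intros cw cE)
  have i2: "(\<lambda>x. Dw (Lc x) v * exp (- EE C (Lc x))) integrable_on cbox (0,0) (1,1)"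
    by (intro integrable_continuous ic continuous_intros cdw cE)
  have "0 = integral (cbox (0,0) (1,1)) (\<lambda>x. w (Lc x) * exp (- EE C (Lc x)) * (- EE C v) + Dw (Lc x) v * exp (- EE C (Lc x)))"
    using z unfolding DG_def by (simp add: mult.assoc)
  also have "\<dots> = integral (cbox (0,0) (1,1)) (\<lambda>x. w (Lc x) * exp (- EE C (Lc x)) * (- EE C v)) + integral (cbox (0,0) (1,1)) (\<lambda>x. Dw (Lc x) v * exp (- EE C (Lc x)))"
    by (rule integral_add[OF i1 i2])
  also have "integral (cbox (0,0) (1,1)) (\<lambda>x. w (Lc x) * exp (- EE C (Lc x)) * (- EE C v)) = - EE C v * cf w C"
    unfolding cf_def using integral_cmult_c[OF integrable_continuous[OF ic[of "\<lambda>z. w z * exp (- EE C z)"]], of "- EE C v"]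
    by (simp add: mult.commute continuous_intros cw cE)
  finally show ?thesis by (simp add: algebra_simps)
qed

definition WP :: "(complex \<Rightarrow> quat) \<Rightarrow> complex \<Rightarrow> complex" where "WP \<alpha> z = wpq (\<alpha> z)"
definition WM :: "(complex \<Rightarrow> quat) \<Rightarrow> complex \<Rightarrow> complex" where "WM \<alpha> z = wmq (\<alpha> z)"

lemma H0_props:
  assumes "\<alpha> \<in> H0 \<Gamma> \<beta>0 (hAB A B)"
  obtains D where "\<And>z. (\<alpha> has_derivative D z) (at z)" "\<And>v. continuous_on UNIV (\<lambda>z. D z v)"
    "\<And>z. D z \<i> = qmul (normalN \<beta>0 z) (D z 1)"
    "\<And>z \<gamma>. \<gamma> \<in> \<Gamma> \<Longrightarrow> \<alpha> (z + \<gamma>) = qmul (\<alpha> z) (qc (hAB A B \<gamma>))"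
proof -
  from assms obtain D where D: "\<And>z. (\<alpha> has_derivative D z) (at z)" "continuous_on UNIV (\<lambda>z. D z 1)"
    "continuous_on UNIV (\<lambda>z. D z \<i>)" "\<And>z v. D z (\<i> * v) = qmul (normalN \<beta>0 z) (D z v)"
    and qp: "\<And>z \<gamma>. \<gamma> \<in> \<Gamma> \<Longrightarrow> \<alpha> (z + \<gamma>) = qmul (\<alpha> z) (qc (hAB A B \<gamma>))"
    unfolding H0_def holo_def by blast
  have lin: "linear (D z)" for z using D(1) has_derivative_linear by blast
  have dv: "D z v = Re v *\<^sub>R D z 1 + Im v *\<^sub>R D z \<i>" for z v
  proof -
    have "v = Re v *\<^sub>R 1 + Im v *\<^sub>R \<i>" by (simp add: complex_eq_iff)
    then have "D z v = D z (Re v *\<^sub>R 1 + Im v *\<^sub>R \<i>)" by metis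
    then show ?thesis using lin[of z] by (simp add: linear_add linear_scale)
  qed
  have c: "continuous_on UNIV (\<lambda>z. D z v)" for v
  proof -
    have e: "(\<lambda>z. D z v) = (\<lambda>z. Re v *\<^sub>R D z 1 + Im v *\<^sub>R D z \<i>)" by (rule ext, rule dv)
    show ?thesis unfolding e by (intro continuous_intros D(2,3))
  qed
  have h: "D z \<i> = qmul (normalN \<beta>0 z) (D z 1)" for z using D(4)[of z 1] by simp
  show ?thesis by (rule that[OF D(1) c h qp])
qed

lemma exp_beta_shift1: "exp (\<i> * of_real (betaf \<beta>0 z)) * exp (- EE C z) = exp (- EE (C + \<beta>0) z)"
  unfolding betaf_def EE_def by (simp add: exp_add[symmetric] inner_add_left algebra_simps)

lemma exp_beta_shift2: "exp (- (\<i> * of_real (betaf \<beta>0 z))) * exp (- EE (C + \<beta>0) z) = exp (- EE C z)"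
  unfolding betaf_def EE_def by (simp add: exp_add[symmetric] inner_add_left algebra_simps)

lemma Cs_shift: "C \<in> Cs \<Longrightarrow> C + \<beta>0 \<in> Cs"
proof -
  assume "C \<in> Cs"
  then have "(C - B) + \<beta>0 \<in> dual_lattice \<Gamma>" unfolding Cs_def using dual_add[OF _ b_dual] by simp
  moreover have "C + \<beta>0 - B = (C - B) + \<beta>0" by simp
  ultimately show ?thesis unfolding Cs_def by (metis mem_Collect_eq)
qed

lemma rels:
  assumes a: "\<alpha> \<in> H0 \<Gamma> \<beta>0 (hAB A B)" and C: "C \<in> Cs"
  shows "EE C \<i> * cf (WP \<alpha>) C = \<i> * EE (C + \<beta>0) 1 * cf (WM \<alpha>) (C + \<beta>0)"
    and "EE (C + \<beta>0) \<i> * cf (WM \<alpha>) (C + \<beta>0) = \<i> * EE C 1 * cf (WP \<alpha>) C"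
proof -
  obtain D where D: "\<And>z. (\<alpha> has_derivative D z) (at z)" "\<And>v. continuous_on UNIV (\<lambda>z. D z v)"
    "\<And>z. D z \<i> = qmul (normalN \<beta>0 z) (D z 1)"
    "\<And>z \<gamma>. \<gamma> \<in> \<Gamma> \<Longrightarrow> \<alpha> (z + \<gamma>) = qmul (\<alpha> z) (qc (hAB A B \<gamma>))"
    using H0_props[OF a] by blast
  have dP: "(WP \<alpha> has_derivative (\<lambda>v. wpq (D z v))) (at z)" for z
    unfolding WP_def by (rule bounded_linear.has_derivative[OF bl_wpq D(1)])
  have dM: "(WM \<alpha> has_derivative (\<lambda>v. wmq (D z v))) (at z)" for z
    unfolding WM_def by (rule bounded_linear.has_derivative[OF bl_wmq D(1)])
  have cP: "continuous_on UNIV (\<lambda>z. wpq (D z v))" for v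
    by (rule continuous_on_compose2[OF linear_continuous_on[OF bl_wpq] D(2)]) auto
  have cM: "continuous_on UNIV (\<lambda>z. wmq (D z v))" for v
    by (rule continuous_on_compose2[OF linear_continuous_on[OF bl_wmq] D(2)]) auto
  have qP: "WP \<alpha> (z + \<gamma>) = WP \<alpha> z * hAB A B \<gamma>" if "\<gamma> \<in> \<Gamma>" for z \<gamma>
    unfolding WP_def D(4)[OF that] wpq_qc ..
  have qM: "WM \<alpha> (z + \<gamma>) = WM \<alpha> z * hAB A B \<gamma>" if "\<gamma> \<in> \<Gamma>" for z \<gamma>
    unfolding WM_def D(4)[OF that] wmq_qc ..
  have hp: "wpq (D z \<i>) = \<i> * exp (\<i> * of_real (betaf \<beta>0 z)) * wmq (D z 1)"
   and hm: "wmq (D z \<i>) = \<i> * exp (- (\<i> * of_real (betaf \<beta>0 z))) * wpq (D z 1)" for z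
    using D(3)[of z] unfolding normalN_def holo_point by auto
  have C': "C + \<beta>0 \<in> Cs" by (rule Cs_shift[OF C])
  have "EE C \<i> * cf (WP \<alpha>) C = integral (cbox (0,0) (1,1)) (\<lambda>x. wpq (D (Lc x) \<i>) * exp (- EE C (Lc x)))"
    by (rule ibp_cf[OF dP cP qP C, symmetric])
  also have "\<dots> = integral (cbox (0,0) (1,1)) (\<lambda>x. \<i> * (wmq (D (Lc x) 1) * exp (- EE (C + \<beta>0) (Lc x))))"
  proof (rule integral_cong)
    fix x
    have "wpq (D (Lc x) \<i>) * exp (- EE C (Lc x)) = \<i> * (wmq (D (Lc x) 1) * (exp (\<i> * of_real (betaf \<beta>0 (Lc x))) * exp (- EE C (Lc x))))"
      unfolding hp by (simp only: mult_ac)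
    then show "wpq (D (Lc x) \<i>) * exp (- EE C (Lc x)) = \<i> * (wmq (D (Lc x) 1) * exp (- EE (C + \<beta>0) (Lc x)))"
      unfolding exp_beta_shift1 .
  qed
  also have "\<dots> = \<i> * (EE (C + \<beta>0) 1 * cf (WM \<alpha>) (C + \<beta>0))"
    using integral_cmult_u[of "cbox (0,0) (1,1)" \<i> "\<lambda>x. wmq (D (Lc x) 1) * exp (- EE (C + \<beta>0) (Lc x))"]
      ibp_cf[OF dM cM qM C', of 1] by simp
  finally show "EE C \<i> * cf (WP \<alpha>) C = \<i> * EE (C + \<beta>0) 1 * cf (WM \<alpha>) (C + \<beta>0)" by (simp add: mult_ac)
  have "EE (C + \<beta>0) \<i> * cf (WM \<alpha>) (C + \<beta>0) = integral (cbox (0,0) (1,1)) (\<lambda>x. wmq (D (Lc x) \<i>) * exp (- EE (C + \<beta>0) (Lc x)))"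
    by (rule ibp_cf[OF dM cM qM C', symmetric])
  also have "\<dots> = integral (cbox (0,0) (1,1)) (\<lambda>x. \<i> * (wpq (D (Lc x) 1) * exp (- EE C (Lc x))))"
  proof (rule integral_cong)
    fix x
    have "wmq (D (Lc x) \<i>) * exp (- EE (C + \<beta>0) (Lc x)) = \<i> * (wpq (D (Lc x) 1) * (exp (- (\<i> * of_real (betaf \<beta>0 (Lc x)))) * exp (- EE (C + \<beta>0) (Lc x))))"
      unfolding hm by (simp only: mult_ac)
    then show "wmq (D (Lc x) \<i>) * exp (- EE (C + \<beta>0) (Lc x)) = \<i> * (wpq (D (Lc x) 1) * exp (- EE C (Lc x)))"
      unfolding exp_beta_shift2 .
  qed
  also have "\<dots> = \<i> * (EE C 1 * cf (WP \<alpha>) C)"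
    using integral_cmult_u[of "cbox (0,0) (1,1)" \<i> "\<lambda>x. wpq (D (Lc x) 1) * exp (- EE C (Lc x))"]
      ibp_cf[OF dP cP qP C, of 1] by simp
  finally show "EE (C + \<beta>0) \<i> * cf (WM \<alpha>) (C + \<beta>0) = \<i> * EE C 1 * cf (WP \<alpha>) C" by (simp add: mult_ac)
qed

end




lemma ker2_zero:
  fixes e1 e2 f1 f2 X Y :: complex
  assumes h1: "e2 * X = \<i> * f1 * Y" and h2: "f2 * Y = \<i> * e1 * X"
    and d: "e1 * f1 + e2 * f2 \<noteq> 0"
  shows "X = 0 \<and> Y = 0"
proof -
  have "(e1 * f1 + e2 * f2) * X = 0"
  proof -
    have "e2 * f2 * X = f2 * (e2 * X)" by (simp add: mult_ac)
    also have "\<dots> = \<i> * f1 * (f2 * Y)" unfolding h1 by (simp add: mult_ac)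
    also have "\<dots> = - e1 * f1 * X" unfolding h2 by (simp add: mult_ac)
    finally show ?thesis by (simp add: algebra_simps)
  qed
  then have X: "X = 0" using d by simp
  have "(e1 * f1 + e2 * f2) * Y = 0"
  proof -
    have "e2 * f2 * Y = e2 * (f2 * Y)" by (simp add: mult_ac)
    also have "\<dots> = \<i> * e1 * (e2 * X)" unfolding h2 by (simp add: mult_ac)
    also have "\<dots> = - e1 * f1 * Y" unfolding h1 by (simp add: mult_ac)
    finally show ?thesis by (simp add: algebra_simps)
  qed
  then have "Y = 0" using d by simp
  with X show ?thesis by simp
qed

definition X0f :: "complex \<Rightarrow> complex \<Rightarrow> complex \<Rightarrow> complex \<Rightarrow> complex" where
  "X0f e1 e2 f1 f2 = (if f1 \<noteq> 0 \<or> e2 \<noteq> 0 then \<i> * f1 else f2)"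
definition Y0f :: "complex \<Rightarrow> complex \<Rightarrow> complex \<Rightarrow> complex \<Rightarrow> complex" where
  "Y0f e1 e2 f1 f2 = (if f1 \<noteq> 0 \<or> e2 \<noteq> 0 then e2 else \<i> * e1)"

lemma ker2_sol:
  fixes e1 e2 f1 f2 :: complex
  assumes d: "e1 * f1 + e2 * f2 = 0"
  shows "e2 * X0f e1 e2 f1 f2 = \<i> * f1 * Y0f e1 e2 f1 f2" and "f2 * Y0f e1 e2 f1 f2 = \<i> * e1 * X0f e1 e2 f1 f2"
proof -
  have "f2 * e2 = - (e1 * f1)" using d by (simp add: algebra_simps add_eq_0_iff)
  then show "e2 * X0f e1 e2 f1 f2 = \<i> * f1 * Y0f e1 e2 f1 f2" "f2 * Y0f e1 e2 f1 f2 = \<i> * e1 * X0f e1 e2 f1 f2"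
    unfolding X0f_def Y0f_def using d by (auto simp: algebra_simps)
qed

lemma ker2_nz:
  fixes e1 e2 f1 f2 :: complex
  assumes "e1 \<noteq> 0 \<or> e2 \<noteq> 0" "f1 \<noteq> 0 \<or> f2 \<noteq> 0"
  shows "X0f e1 e2 f1 f2 \<noteq> 0 \<or> Y0f e1 e2 f1 f2 \<noteq> 0"
  using assms unfolding X0f_def Y0f_def by auto

lemma ker2_span:
  fixes e1 e2 f1 f2 X Y :: complex
  assumes h1: "e2 * X = \<i> * f1 * Y" and h2: "f2 * Y = \<i> * e1 * X"
    and ne: "e1 \<noteq> 0 \<or> e2 \<noteq> 0" "f1 \<noteq> 0 \<or> f2 \<noteq> 0"
  shows "\<exists>x. X = x * X0f e1 e2 f1 f2 \<and> Y = x * Y0f e1 e2 f1 f2"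
proof (cases "f1 \<noteq> 0 \<or> e2 \<noteq> 0")
  case True
  show ?thesis
  proof (cases "e2 = 0")
    case False
    have "X = (Y / e2) * (\<i> * f1)" using h1 False by (simp add: field_simps)
    moreover have "Y = (Y / e2) * e2" using False by simp
    ultimately show ?thesis using True unfolding X0f_def Y0f_def by (intro exI[of _ "Y / e2"]) simp
  next
    case e2: True
    then have f1: "f1 \<noteq> 0" using True by simp
    have Y: "Y = 0" using h1 e2 f1 by simp
    have "X = (X / (\<i> * f1)) * (\<i> * f1)" using f1 by simp
    then show ?thesis using True Y e2 unfolding X0f_def Y0f_def by (intro exI[of _ "X / (\<i> * f1)"]) simp
  qed
next
  case False
  then have f1: "f1 = 0" and e2: "e2 = 0" by auto
  then have e1: "e1 \<noteq> 0" and f2: "f2 \<noteq> 0" using ne by auto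
  have "Y = (X / f2) * (\<i> * e1)" using h2 f2 by (simp add: field_simps)
  moreover have "X = (X / f2) * f2" using f2 by simp
  ultimately show ?thesis using False unfolding X0f_def Y0f_def by (intro exI[of _ "X / f2"]) simp
qed

context setting
begin

definition Del :: "complex \<Rightarrow> complex" where
  "Del C = EE C 1 * EE (C + \<beta>0) 1 + EE C \<i> * EE (C + \<beta>0) \<i>"

definition adm :: "complex \<Rightarrow> bool" where
  "adm C \<longleftrightarrow> A \<bullet> (2 *\<^sub>R C + \<beta>0) = 0 \<and> (norm A)\<^sup>2 = C \<bullet> (C + \<beta>0)"

lemma Del_eq: "Del C = 4 * of_real (pi\<^sup>2) * (of_real ((norm A)\<^sup>2 - C \<bullet> (C + \<beta>0)) - \<i> * of_real (A \<bullet> (2 *\<^sub>R C + \<beta>0)))"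
  unfolding Del_def EE_def cmod_power2
  by (simp add: complex_eq_iff inner_complex_def power2_eq_square algebra_simps)

lemma Del_zero: "Del C = 0 \<longleftrightarrow> adm C"
proof -
  have "Del C = 0 \<longleftrightarrow> (of_real ((norm A)\<^sup>2 - C \<bullet> (C + \<beta>0)) - \<i> * of_real (A \<bullet> (2 *\<^sub>R C + \<beta>0)) :: complex) = 0"
    unfolding Del_eq by simp
  also have "\<dots> \<longleftrightarrow> adm C" unfolding adm_def by (auto simp add: complex_eq_iff)
  finally show ?thesis .
qed

lemma EE_nz: "EE C 1 \<noteq> 0 \<or> EE C \<i> \<noteq> 0"
proof (rule ccontr)
  assume "\<not> ?thesis"
  then have "Re (EE C 1) = 0" "Re (EE C \<i>) = 0" by auto
  then have "Re A = 0" "Im A = 0" unfolding EE_def by (simp_all add: inner_complex_def)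
  then show False using A_nz by (simp add: complex_eq_iff)
qed

definition X0 where "X0 C = X0f (EE C 1) (EE C \<i>) (EE (C + \<beta>0) 1) (EE (C + \<beta>0) \<i>)"
definition Y0 where "Y0 C = Y0f (EE C 1) (EE C \<i>) (EE (C + \<beta>0) 1) (EE (C + \<beta>0) \<i>)"

lemma XY0_nz: "X0 C \<noteq> 0 \<or> Y0 C \<noteq> 0"
  unfolding X0_def Y0_def by (rule ker2_nz[OF EE_nz EE_nz])

lemma XY0_sol: assumes "adm C"
  shows "EE C \<i> * X0 C = \<i> * EE (C + \<beta>0) 1 * Y0 C" "EE (C + \<beta>0) \<i> * Y0 C = \<i> * EE C 1 * X0 C"
  using ker2_sol[of "EE C 1" "EE (C + \<beta>0) 1" "EE C \<i>" "EE (C + \<beta>0) \<i>"] assms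
  unfolding X0_def Y0_def Del_zero[symmetric] Del_def by auto

lemma coef_nadm:
  assumes "\<alpha> \<in> H0 \<Gamma> \<beta>0 (hAB A B)" "C \<in> Cs" "\<not> adm C"
  shows "cf (WP \<alpha>) C = 0 \<and> cf (WM \<alpha>) (C + \<beta>0) = 0"
  by (rule ker2_zero[OF rels[OF assms(1,2)]]) (use assms(3) Del_zero Del_def in auto)

lemma coef_adm:
  assumes "\<alpha> \<in> H0 \<Gamma> \<beta>0 (hAB A B)" "C \<in> Cs"
  shows "\<exists>x. cf (WP \<alpha>) C = x * X0 C \<and> cf (WM \<alpha>) (C + \<beta>0) = x * Y0 C"
  unfolding X0_def Y0_def by (rule ker2_span[OF rels[OF assms] EE_nz EE_nz])

end




lemma N_sq: "qmul (normalN b z) (qmul (normalN b z) X) = - X"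
  by (simp add: normalN_def qmul_def qexpj_def qc_def prod_eq_iff algebra_simps power2_eq_square[symmetric])
     (simp only: distrib_left[symmetric] of_real_power[symmetric] of_real_add[symmetric] sin_cos_squared_add2, simp)

lemma qmul_lin2: "qmul N (a *\<^sub>R X + b *\<^sub>R Y) = a *\<^sub>R qmul N X + b *\<^sub>R qmul N Y"
  by (simp add: qmul_def prod_eq_iff scaleR_conv_of_real algebra_simps)

lemma lin_dv: "linear D \<Longrightarrow> D v = Re v *\<^sub>R D 1 + Im v *\<^sub>R D \<i>"
proof -
  assume lin: "linear D"
  have "v = Re v *\<^sub>R 1 + Im v *\<^sub>R \<i>" by (simp add: complex_eq_iff)
  then have "D v = D (Re v *\<^sub>R 1 + Im v *\<^sub>R \<i>)" by metis
  then show ?thesis using lin by (simp add: linear_add linear_scale)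
qed

lemma holo_ext:
  assumes lin: "linear D" and h: "D \<i> = qmul (normalN b z) (D 1)"
  shows "D (\<i> * v) = qmul (normalN b z) (D v)"
proof -
  have "D (\<i> * v) = Re (\<i> * v) *\<^sub>R D 1 + Im (\<i> * v) *\<^sub>R D \<i>" by (rule lin_dv[OF lin])
  also have "\<dots> = (- Im v) *\<^sub>R D 1 + Re v *\<^sub>R D \<i>" by simp
  also have "\<dots> = qmul (normalN b z) (Re v *\<^sub>R D 1 + Im v *\<^sub>R D \<i>)"
    unfolding qmul_lin2 h N_sq by simp
  also have "Re v *\<^sub>R D 1 + Im v *\<^sub>R D \<i> = D v" by (rule lin_dv[OF lin, symmetric])
  finally show ?thesis .
qed

lemma has_derivative_exp_lin:
  fixes E :: "complex \<Rightarrow> complex"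
  assumes "bounded_linear E"
  shows "((\<lambda>z. exp (E z)) has_derivative (\<lambda>h. exp (E z) * E h)) (at z)"
  using has_derivative_exp_neg[of "\<lambda>z. - E z" z] assms by (simp add: bounded_linear_minus)

definition qrec :: "complex \<times> complex \<Rightarrow> quat" where
  "qrec q = ((fst q + snd q) / 2, cnj ((fst q - snd q) / (2 * \<i>)))"

lemma bl_qrec: "bounded_linear qrec"
proof -
  have a: "bounded_linear (\<lambda>x::complex\<times>complex. fst x + snd x)"
    by (intro bounded_linear_add bounded_linear_fst bounded_linear_snd)
  have b: "bounded_linear (\<lambda>x::complex\<times>complex. fst x - snd x)"
    by (intro bounded_linear_sub bounded_linear_fst bounded_linear_snd)
  show ?thesis unfolding qrec_def
    by (intro bounded_linear_Pair bounded_linear_compose[OF bounded_linear_cnj] bounded_linear_compose[OF bounded_linear_divide a] bounded_linear_compose[OF bounded_linear_divide b])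
qed

context setting
begin

definition sp where "sp C z = X0 C * exp (EE C z)"
definition sm where "sm C z = Y0 C * exp (EE (C + \<beta>0) z)"
definition sol where "sol C z = qrec (sp C z, sm C z)"

lemma WP_sol: "WP (sol C) = sp C" unfolding WP_def sol_def qrec_def by (rule ext, simp only: fst_conv snd_conv wpq_rec)
lemma WM_sol: "WM (sol C) = sm C" unfolding WM_def sol_def qrec_def by (rule ext, simp only: fst_conv snd_conv wmq_rec)

lemma cont_expEE: "continuous_on UNIV (\<lambda>z. exp (EE C z))"
  by (intro continuous_intros linear_continuous_on[OF bl_EE])

lemma exp_beta_pos1: "exp (\<i> * of_real (betaf \<beta>0 z)) * exp (EE (C + \<beta>0) z) = exp (EE C z)"
  unfolding betaf_def EE_def by (simp add: exp_add[symmetric] inner_add_left algebra_simps)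
lemma exp_beta_pos2: "exp (- (\<i> * of_real (betaf \<beta>0 z))) * exp (EE C z) = exp (EE (C + \<beta>0) z)"
  unfolding betaf_def EE_def by (simp add: exp_add[symmetric] inner_add_left algebra_simps)

lemma sol_H0:
  assumes C: "C \<in> Cs" and ad: "adm C"
  shows "sol C \<in> H0 \<Gamma> \<beta>0 (hAB A B)"
proof -
  define D where "D z v = qrec (sp C z * EE C v, sm C z * EE (C + \<beta>0) v)" for z v
  have dsp: "(sp C has_derivative (\<lambda>v. sp C z * EE C v)) (at z)" for z
    unfolding sp_def using has_derivative_mult_right[OF has_derivative_exp_lin[OF bl_EE], of "X0 C" C z]
    by (simp add: mult.assoc)
  have dsm: "(sm C has_derivative (\<lambda>v. sm C z * EE (C + \<beta>0) v)) (at z)" for z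
    unfolding sm_def using has_derivative_mult_right[OF has_derivative_exp_lin[OF bl_EE], of "Y0 C" "C + \<beta>0" z]
    by (simp add: mult.assoc)
  have dsol: "(sol C has_derivative D z) (at z)" for z
    unfolding sol_def D_def by (rule bounded_linear.has_derivative[OF bl_qrec has_derivative_Pair[OF dsp dsm]])
  have csp: "continuous_on UNIV (sp C)" unfolding sp_def by (intro continuous_intros cont_expEE)
  have csm: "continuous_on UNIV (sm C)" unfolding sm_def by (intro continuous_intros cont_expEE)
  have cD: "continuous_on UNIV (\<lambda>z. D z v)" for v
    unfolding D_def by (rule continuous_on_compose2[OF linear_continuous_on[OF bl_qrec]]) (auto intro!: continuous_intros csp csm)
  have lin: "linear (D z)" for z using dsol has_derivative_linear by blast
  have h1: "D z \<i> = qmul (normalN \<beta>0 z) (D z 1)" for z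
    unfolding normalN_def holo_point
  proof
    have s1: "EE C \<i> * X0 C = \<i> * EE (C + \<beta>0) 1 * Y0 C" using XY0_sol(1)[OF ad] .
    have "wpq (D z \<i>) = X0 C * EE C \<i> * exp (EE C z)" unfolding D_def qrec_def wpq_rec sp_def by (simp add: mult_ac)
    also have "\<dots> = \<i> * EE (C + \<beta>0) 1 * Y0 C * (exp (\<i> * of_real (betaf \<beta>0 z)) * exp (EE (C + \<beta>0) z))"
      unfolding exp_beta_pos1 using s1 by (simp add: mult_ac)
    also have "\<dots> = \<i> * exp (\<i> * of_real (betaf \<beta>0 z)) * wmq (D z 1)"
      unfolding D_def qrec_def wmq_rec sm_def by (simp add: mult_ac)
    finally show "wpq (D z \<i>) = \<i> * exp (\<i> * of_real (betaf \<beta>0 z)) * wmq (D z 1)" .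
    have s2: "EE (C + \<beta>0) \<i> * Y0 C = \<i> * EE C 1 * X0 C" using XY0_sol(2)[OF ad] .
    have "wmq (D z \<i>) = Y0 C * EE (C + \<beta>0) \<i> * exp (EE (C + \<beta>0) z)" unfolding D_def qrec_def wmq_rec sm_def by (simp add: mult_ac)
    also have "\<dots> = \<i> * EE C 1 * X0 C * (exp (- (\<i> * of_real (betaf \<beta>0 z))) * exp (EE C z))"
      unfolding exp_beta_pos2 using s2 by (simp add: mult_ac)
    also have "\<dots> = \<i> * exp (- (\<i> * of_real (betaf \<beta>0 z))) * wpq (D z 1)"
      unfolding D_def qrec_def wpq_rec sp_def by (simp add: mult_ac)
    finally show "wmq (D z \<i>) = \<i> * exp (- (\<i> * of_real (betaf \<beta>0 z))) * wpq (D z 1)" .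
  qed
  have hol: "holo \<beta>0 (sol C)"
    unfolding holo_def
    by (intro exI[of _ D] conjI allI dsol cD holo_ext[OF lin h1])
  have qp: "sol C (z + \<gamma>) = qmul (sol C z) (qc (hAB A B \<gamma>))" if g: "\<gamma> \<in> \<Gamma>" for z \<gamma>
  proof (rule wq_inj)
    show "wpq (sol C (z + \<gamma>)) = wpq (qmul (sol C z) (qc (hAB A B \<gamma>)))"
      unfolding wpq_qc sol_def qrec_def wpq_rec sp_def exp_EE_shift[OF C g] by (simp add: mult_ac)
    show "wmq (sol C (z + \<gamma>)) = wmq (qmul (sol C z) (qc (hAB A B \<gamma>)))"
      unfolding wmq_qc sol_def qrec_def wmq_rec sm_def exp_EE_shift[OF Cs_shift[OF C] g] by (simp add: mult_ac)
  qed
  show ?thesis unfolding H0_def using hol qp by blast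
qed

lemma orth:
  assumes "C \<in> Cs" "C' \<in> Cs"
  shows "cf (\<lambda>z. exp (EE C z)) C' = (if C' = C then 1 else 0)"
proof -
  have d: "C - C' \<in> dual_lattice \<Gamma>"
    using dual_diff[of "C - B" "C' - B"] assms unfolding Cs_def by simp
  obtain m where m: "(C - C') \<bullet> w1 = of_int m" using dual_int[OF d] by (auto elim: Ints_cases)
  obtain n where n: "(C - C') \<bullet> w2 = of_int n" using dual_int[OF d] by (auto elim: Ints_cases)
  have "exp (EE C (Lc x)) * exp (- EE C' (Lc x)) = ek (-m) (-n) x" for x
  proof -
    have "exp (EE C (Lc x)) * exp (- EE C' (Lc x)) = exp (EE C (Lc x) - EE C' (Lc x))"
      by (simp add: exp_add[symmetric])
    also have "\<dots> = ek (-m) (-n) x"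
      unfolding EE_diffC ek_def inner_Lc m n by (simp add: algebra_simps)
    finally show ?thesis .
  qed
  then have "cf (\<lambda>z. exp (EE C z)) C' = integral (cbox (0,0) (1,1)) (ek (-m) (-n))"
    unfolding cf_def by simp
  also have "\<dots> = (if - m = 0 \<and> - n = 0 then 1 else 0)" by (rule int_ek)
  also have "(- m = 0 \<and> - n = 0) \<longleftrightarrow> C' = C"
  proof
    assume "- m = 0 \<and> - n = 0"
    then have "C - C' = 0" using dual_zero[of "C - C'"] m n by simp
    then show "C' = C" by simp
  next
    assume "C' = C"
    then show "- m = 0 \<and> - n = 0" using m n by simp
  qed
  finally show ?thesis .
qed

lemma cf_scale: "cf (\<lambda>z. c * f z) C = c * cf f C"
  unfolding cf_def by (simp add: mult.assoc integral_cmult_u)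

lemma cf_sp: "C \<in> Cs \<Longrightarrow> C' \<in> Cs \<Longrightarrow> cf (sp C) C' = (if C' = C then X0 C else 0)"
  unfolding sp_def using cf_scale[of "X0 C" "\<lambda>z. exp (EE C z)" C'] orth[of C C'] by simp

lemma cf_sm: "C \<in> Cs \<Longrightarrow> C' \<in> Cs \<Longrightarrow> cf (sm C) C' = (if C' = C + \<beta>0 then Y0 C else 0)"
  unfolding sm_def using cf_scale[of "Y0 C" "\<lambda>z. exp (EE (C + \<beta>0) z)" C'] orth[of "C + \<beta>0" C'] Cs_shift by simp

end




lemma qmul_assoc: "qmul (qmul a b) c = qmul a (qmul b c)"
  by (simp add: qmul_def prod_eq_iff algebra_simps)

lemma qmul_add_right: "qmul a (b + c) = qmul a b + qmul a c"
  by (simp add: qmul_def prod_eq_iff algebra_simps)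
lemma qmul_add_left: "qmul (a + b) c = qmul a c + qmul b c"
  by (simp add: qmul_def prod_eq_iff algebra_simps)
lemma qmul_0_right: "qmul a 0 = 0" by (simp add: qmul_def zero_prod_def)
lemma qmul_0_left: "qmul 0 a = 0" by (simp add: qmul_def zero_prod_def)
lemma qc_comm: "qmul (qc a) (qc b) = qmul (qc b) (qc a)" by (simp add: qmul_def qc_def mult.commute)

lemma bl_qmul_right: "bounded_linear (\<lambda>x. qmul x c)"
proof -
  have "qmul x c = (fst x * fst c - cnj (snd c) * snd x, fst x * snd c + cnj (fst c) * snd x)" for x
    by (simp add: qmul_def mult.commute)
  then have e: "(\<lambda>x. qmul x c) = (\<lambda>x. (fst x * fst c - cnj (snd c) * snd x, fst x * snd c + cnj (fst c) * snd x))" by auto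
  show ?thesis unfolding e
    by (intro bounded_linear_Pair bounded_linear_sub bounded_linear_add
        bounded_linear_compose[OF bounded_linear_mult_left bounded_linear_fst]
        bounded_linear_compose[OF bounded_linear_mult_right bounded_linear_snd])
qed

lemma H0_subspace: "module.subspace rscale (H0 \<Gamma> \<beta>0 h)"
proof -
  interpret V: vector_space rscale by (rule vector_space_rscale)
  show ?thesis
  proof (rule V.subspaceI)
    show "0 \<in> H0 \<Gamma> \<beta>0 h"
      unfolding H0_def holo_def
    proof (intro CollectI conjI exI[of _ "\<lambda>z v. 0"] allI ballI)
      show "(0 has_derivative (\<lambda>v. 0)) (at z)" for z :: complex
        using has_derivative_const[of "0::quat" "at z"] by (simp add: zero_fun_def)
    qed (auto simp: qmul_0_right qmul_0_left)
  next
    fix x y assume x: "x \<in> H0 \<Gamma> \<beta>0 h" and y: "y \<in> H0 \<Gamma> \<beta>0 h"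
    from x obtain D where D: "\<And>z. (x has_derivative D z) (at z)" "continuous_on UNIV (\<lambda>z. D z 1)"
      "continuous_on UNIV (\<lambda>z. D z \<i>)" "\<And>z v. D z (\<i> * v) = qmul (normalN \<beta>0 z) (D z v)"
      and qx: "\<And>\<gamma> z. \<gamma> \<in> \<Gamma> \<Longrightarrow> x (z + \<gamma>) = qmul (x z) (qc (h \<gamma>))"
      unfolding H0_def holo_def by blast
    from y obtain E where E: "\<And>z. (y has_derivative E z) (at z)" "continuous_on UNIV (\<lambda>z. E z 1)"
      "continuous_on UNIV (\<lambda>z. E z \<i>)" "\<And>z v. E z (\<i> * v) = qmul (normalN \<beta>0 z) (E z v)"
      and qy: "\<And>\<gamma> z. \<gamma> \<in> \<Gamma> \<Longrightarrow> y (z + \<gamma>) = qmul (y z) (qc (h \<gamma>))"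
      unfolding H0_def holo_def by blast
    have "holo \<beta>0 (x + y)"
      unfolding holo_def plus_fun_def
      by (intro exI[of _ "\<lambda>z v. D z v + E z v"] conjI allI has_derivative_add D(1) E(1) continuous_intros D(2,3) E(2,3))
         (simp add: D(4) E(4) qmul_add_right)
    moreover have "(x + y) (z + \<gamma>) = qmul ((x + y) z) (qc (h \<gamma>))" if "\<gamma> \<in> \<Gamma>" for z \<gamma>
      using qx[OF that] qy[OF that] by (simp add: qmul_add_left)
    ultimately show "x + y \<in> H0 \<Gamma> \<beta>0 h" unfolding H0_def by blast
  next
    fix c x assume x: "x \<in> H0 \<Gamma> \<beta>0 h"
    from x obtain D where D: "\<And>z. (x has_derivative D z) (at z)" "continuous_on UNIV (\<lambda>z. D z 1)"
      "continuous_on UNIV (\<lambda>z. D z \<i>)" "\<And>z v. D z (\<i> * v) = qmul (normalN \<beta>0 z) (D z v)"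
      and qx: "\<And>\<gamma> z. \<gamma> \<in> \<Gamma> \<Longrightarrow> x (z + \<gamma>) = qmul (x z) (qc (h \<gamma>))"
      unfolding H0_def holo_def by blast
    have cr: "continuous_on UNIV (\<lambda>q. qmul q (qc c))" by (rule linear_continuous_on[OF bl_qmul_right])
    have "holo \<beta>0 (rscale c x)"
      unfolding holo_def rscale_def
      by (intro exI[of _ "\<lambda>z v. qmul (D z v) (qc c)"] conjI allI bounded_linear.has_derivative[OF bl_qmul_right D(1)]
          continuous_on_compose2[OF cr D(2)] continuous_on_compose2[OF cr D(3)])
         (auto simp: D(4) qmul_assoc)
    moreover have "rscale c x (z + \<gamma>) = qmul (rscale c x z) (qc (h \<gamma>))" if "\<gamma> \<in> \<Gamma>" for z \<gamma>
      using qx[OF that] unfolding rscale_def by (simp add: qmul_assoc qc_comm)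
    ultimately show "rscale c x \<in> H0 \<Gamma> \<beta>0 h" unfolding H0_def by blast
  qed
qed




lemma half_inner: "((1/2) *\<^sub>R (W - b)) \<bullet> ((1/2) *\<^sub>R (W - b) + b) = ((norm W)\<^sup>2 - (norm b)\<^sup>2) / 4"
  for W b :: complex
proof -
  have "(1/2) *\<^sub>R (W - b) + b = (1/2) *\<^sub>R (W + b)" by (simp add: scaleR_conv_of_real field_simps)
  then have "((1/2) *\<^sub>R (W - b)) \<bullet> ((1/2) *\<^sub>R (W - b) + b) = (1/4) * ((W - b) \<bullet> (W + b))" by simp
  also have "(W - b) \<bullet> (W + b) = W \<bullet> W - b \<bullet> b"
    by (simp add: inner_diff_left inner_diff_right inner_add_right inner_commute[of b W] algebra_simps)
  finally show ?thesis by (simp add: power2_norm_eq_inner)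
qed

lemma perp_iA:
  fixes A W :: complex
  assumes "A \<noteq> 0" "A \<bullet> W = 0"
  shows "W = (W \<bullet> (\<i> * A) / (norm A)\<^sup>2) *\<^sub>R (\<i> * A)"
proof -
  have n: "(norm A)\<^sup>2 = (Re A)\<^sup>2 + (Im A)\<^sup>2" by (simp add: cmod_power2)
  have nz: "(Re A)\<^sup>2 + (Im A)\<^sup>2 \<noteq> 0" using assms(1) by (simp add: complex_eq_iff sum_power2_eq_zero_iff)
  have o: "Re A * Re W + Im A * Im W = 0" using assms(2) by (simp add: inner_complex_def)
  show ?thesis using nz o unfolding n
    by (simp add: complex_eq_iff inner_complex_def field_simps power2_eq_square) algebra
qed

lemma iA_inner: "A \<bullet> (\<i> * A) = 0" for A :: complex
  by (simp add: inner_complex_def)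

lemma norm_iA: "norm (\<i> * A) = norm A" by (simp add: norm_mult)

context setting
begin

definition "R0 = 4 * (norm A)\<^sup>2 + (norm \<beta>0)\<^sup>2"
definition "\<rho> = sqrt R0 / norm A"
definition "Cp = (1/2) *\<^sub>R (\<rho> *\<^sub>R (\<i> * A) - \<beta>0)"
definition "Cm = (1/2) *\<^sub>R (- \<rho> *\<^sub>R (\<i> * A) - \<beta>0)"

lemma R0_pos: "R0 > 0" unfolding R0_def using A_nz by (simp add: add_pos_nonneg)
lemma rho_pos: "\<rho> > 0" unfolding \<rho>_def using R0_pos A_nz by simp
lemma rho_sq: "\<rho>\<^sup>2 * (norm A)\<^sup>2 = R0"
  unfolding \<rho>_def using R0_pos A_nz by (simp add: power_divide)

lemma adm_W: "adm ((1/2) *\<^sub>R (W - \<beta>0)) \<longleftrightarrow> A \<bullet> W = 0 \<and> (norm W)\<^sup>2 = R0"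
proof -
  have "2 *\<^sub>R ((1/2) *\<^sub>R (W - \<beta>0)) + \<beta>0 = W" by (simp add: algebra_simps)
  then show ?thesis unfolding adm_def half_inner R0_def by auto
qed

lemma Cp_adm: "adm Cp"
  unfolding Cp_def adm_W using rho_sq by (simp add: iA_inner norm_iA power_mult_distrib)

lemma Cm_adm: "adm Cm"
proof -
  have "adm ((1/2) *\<^sub>R ((- \<rho>) *\<^sub>R (\<i> * A) - \<beta>0))"
    unfolding adm_W using rho_sq by (simp add: iA_inner norm_iA power_mult_distrib)
  then show ?thesis unfolding Cm_def by simp
qed

lemma adm_cases: assumes "adm C" shows "C = Cp \<or> C = Cm"
proof -
  define W where "W = 2 *\<^sub>R C + \<beta>0"
  have C: "C = (1/2) *\<^sub>R (W - \<beta>0)" unfolding W_def by (simp add: algebra_simps)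
  have aW: "A \<bullet> W = 0" and nW: "(norm W)\<^sup>2 = R0" using assms unfolding C adm_W by auto
  define t where "t = W \<bullet> (\<i> * A) / (norm A)\<^sup>2"
  have W: "W = t *\<^sub>R (\<i> * A)" unfolding t_def by (rule perp_iA[OF A_nz aW])
  have "t\<^sup>2 * (norm A)\<^sup>2 = R0" using nW unfolding W by (simp add: norm_iA power_mult_distrib)
  then have "t\<^sup>2 * (norm A)\<^sup>2 = \<rho>\<^sup>2 * (norm A)\<^sup>2" using rho_sq by simp
  then have "t\<^sup>2 = \<rho>\<^sup>2" using A_nz by simp
  then have "t = \<rho> \<or> t = - \<rho>" by (simp add: power2_eq_iff)
  then show ?thesis unfolding C W Cp_def Cm_def by auto
qed

lemma Cp_ne_Cm: "Cp \<noteq> Cm"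
proof
  assume "Cp = Cm"
  then have "\<rho> *\<^sub>R (\<i> * A) = - \<rho> *\<^sub>R (\<i> * A)" unfolding Cp_def Cm_def by (simp add: algebra_simps)
  then have "\<rho> *\<^sub>R (\<i> * A) = 0" by (simp add: algebra_simps)
  then show False using rho_pos A_nz by simp
qed

lemma K_eq: "{C \<in> Cs. adm C} = {Cp, Cm} \<inter> Cs"
  using adm_cases Cp_adm Cm_adm by auto

lemma Cp_minus_Cm: "Cp - Cm = \<rho> *\<^sub>R (\<i> * A)"
  unfolding Cp_def Cm_def by (simp add: scaleR_conv_of_real field_simps)

lemma dp_of_both: assumes "Cp \<in> Cs" "Cm \<in> Cs" shows "double_point \<Gamma> \<beta>0 A"
proof -
  define \<zeta> where "\<zeta> = \<rho> *\<^sub>R (\<i> * A)"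
  have d: "\<zeta> \<in> dual_lattice \<Gamma>"
    using dual_diff[of "Cp - B" "Cm - B"] assms unfolding Cs_def \<zeta>_def Cp_minus_Cm[symmetric] by simp
  have nz: "(norm \<zeta>)\<^sup>2 = R0" unfolding \<zeta>_def using rho_sq rho_pos by (simp add: norm_iA power_mult_distrib)
  have gt: "norm \<zeta> > norm \<beta>0"
  proof -
    have "(norm \<beta>0)\<^sup>2 < (norm \<zeta>)\<^sup>2" unfolding nz R0_def using A_nz by simp
    then show ?thesis by (rule power2_less_imp_less[OF _ norm_ge_zero])
  qed
  have s: "sqrt (1 - (norm \<beta>0)\<^sup>2 / (norm \<zeta>)\<^sup>2) = 2 * norm A / sqrt R0"
  proof -
    have "1 - (norm \<beta>0)\<^sup>2 / (norm \<zeta>)\<^sup>2 = (2 * norm A / sqrt R0)\<^sup>2"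
      unfolding nz using R0_pos by (simp add: R0_def field_simps power_divide)
    then show ?thesis using R0_pos by simp
  qed
  have "A = - (\<i> / 2) * \<zeta> * of_real (2 * norm A / sqrt R0)"
    unfolding \<zeta>_def \<rho>_def using R0_pos A_nz
    by (simp add: scaleR_conv_of_real field_simps)
  then have "A = - (\<i> / 2) * \<zeta> * of_real (sqrt (1 - (norm \<beta>0)\<^sup>2 / (norm \<zeta>)\<^sup>2))"
    unfolding s .
  then show ?thesis unfolding double_point_def using d gt by blast
qed

lemma dp_transfer: assumes "double_point \<Gamma> \<beta>0 A" "Cp \<in> Cs \<or> Cm \<in> Cs" shows "Cp \<in> Cs \<and> Cm \<in> Cs"
proof -
  from assms(1) obtain \<zeta> where d: "\<zeta> \<in> dual_lattice \<Gamma>" and gt: "norm \<zeta> > norm \<beta>0"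
    and A: "A = - (\<i> / 2) * \<zeta> * of_real (sqrt (1 - (norm \<beta>0)\<^sup>2 / (norm \<zeta>)\<^sup>2))"
    unfolding double_point_def by blast
  define s where "s = sqrt (1 - (norm \<beta>0)\<^sup>2 / (norm \<zeta>)\<^sup>2)"
  have zp: "norm \<zeta> > 0" using gt by (meson le_less_trans norm_ge_zero)
  have s2: "s\<^sup>2 = 1 - (norm \<beta>0)\<^sup>2 / (norm \<zeta>)\<^sup>2"
  proof -
    have "(norm \<beta>0)\<^sup>2 < (norm \<zeta>)\<^sup>2" using gt by (simp add: power_strict_mono)
    then have "0 \<le> 1 - (norm \<beta>0)\<^sup>2 / (norm \<zeta>)\<^sup>2" using zp less_imp_le[OF gt] by (simp add: field_simps)
    then show ?thesis unfolding s_def by simp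
  qed
  have sp: "s > 0"
  proof -
    have "(norm \<beta>0)\<^sup>2 < (norm \<zeta>)\<^sup>2" using gt by (simp add: power_strict_mono)
    then have "0 < 1 - (norm \<beta>0)\<^sup>2 / (norm \<zeta>)\<^sup>2" using zp by (simp add: field_simps)
    then show ?thesis unfolding s_def by simp
  qed
  have A': "A = - (\<i> / 2) * \<zeta> * of_real s" using A unfolding s_def .
  have nA: "norm A = s / 2 * norm \<zeta>" unfolding A' using sp by (simp add: norm_mult)
  have R: "R0 = (norm \<zeta>)\<^sup>2"
    unfolding R0_def nA using s2 zp by (simp add: power_mult_distrib field_simps)
  have rho: "\<rho> = 2 / s" unfolding \<rho>_def R nA using zp sp by simp
  have iA: "\<i> * A = of_real (s/2) * \<zeta>" by (subst A') (simp add: field_simps)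
  have z: "\<rho> *\<^sub>R (\<i> * A) = \<zeta>" unfolding rho iA using sp by (simp add: scaleR_conv_of_real field_simps)
  have "Cp = Cm + \<zeta>" using Cp_minus_Cm z by (simp add: algebra_simps)
  then show ?thesis using assms(2) d dual_add[of "Cm - B" \<zeta>] dual_diff[of "Cp - B" \<zeta>]
    unfolding Cs_def by (auto simp: algebra_simps)
qed

end




lemma sum_fun_apply: "(sum F K) z = (\<Sum>C\<in>K. F C z)"
  by (induction K rule: infinite_finite_induct) auto

lemma wpq_sum: "wpq (\<Sum>C\<in>K. f C) = (\<Sum>C\<in>K. wpq (f C))"
  by (induction K rule: infinite_finite_induct) (auto simp: wpq_add wpq_0)
lemma wmq_sum: "wmq (\<Sum>C\<in>K. f C) = (\<Sum>C\<in>K. wmq (f C))"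
  by (induction K rule: infinite_finite_induct) (auto simp: wmq_add wmq_0)
lemma wpq_diff: "wpq (a - b) = wpq a - wpq b" by (simp add: wpq_def algebra_simps)
lemma wmq_diff: "wmq (a - b) = wmq a - wmq b" by (simp add: wmq_def algebra_simps)

interpretation V: vector_space rscale by (rule vector_space_rscale)

context setting
begin

lemma H0_cont: "\<alpha> \<in> H0 \<Gamma> \<beta>0 (hAB A B) \<Longrightarrow> continuous_on UNIV \<alpha>"
  by (metis H0_props continuous_at_imp_continuous_on has_derivative_continuous)

lemma WP_cont: "\<alpha> \<in> H0 \<Gamma> \<beta>0 (hAB A B) \<Longrightarrow> continuous_on UNIV (WP \<alpha>)"
  unfolding WP_def by (rule continuous_on_compose2[OF linear_continuous_on[OF bl_wpq] H0_cont]) auto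
lemma WM_cont: "\<alpha> \<in> H0 \<Gamma> \<beta>0 (hAB A B) \<Longrightarrow> continuous_on UNIV (WM \<alpha>)"
  unfolding WM_def by (rule continuous_on_compose2[OF linear_continuous_on[OF bl_wmq] H0_cont]) auto

lemma WP_qp: "\<alpha> \<in> H0 \<Gamma> \<beta>0 (hAB A B) \<Longrightarrow> \<gamma> \<in> \<Gamma> \<Longrightarrow> WP \<alpha> (z + \<gamma>) = WP \<alpha> z * hAB A B \<gamma>"
  unfolding WP_def H0_def by (auto simp: wpq_qc)
lemma WM_qp: "\<alpha> \<in> H0 \<Gamma> \<beta>0 (hAB A B) \<Longrightarrow> \<gamma> \<in> \<Gamma> \<Longrightarrow> WM \<alpha> (z + \<gamma>) = WM \<alpha> z * hAB A B \<gamma>"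
  unfolding WM_def H0_def by (auto simp: wmq_qc)

lemma cont_sp: "continuous_on UNIV (sp C)" unfolding sp_def by (intro continuous_intros cont_expEE)
lemma cont_sm: "continuous_on UNIV (sm C)" unfolding sm_def by (intro continuous_intros cont_expEE)

lemma sp_qp: "C \<in> Cs \<Longrightarrow> \<gamma> \<in> \<Gamma> \<Longrightarrow> sp C (z + \<gamma>) = sp C z * hAB A B \<gamma>"
  unfolding sp_def by (simp add: exp_EE_shift mult.assoc)
lemma sm_qp: "C \<in> Cs \<Longrightarrow> \<gamma> \<in> \<Gamma> \<Longrightarrow> sm C (z + \<gamma>) = sm C z * hAB A B \<gamma>"
  unfolding sm_def by (simp add: exp_EE_shift[OF Cs_shift] mult.assoc)

lemma integrable_cf: "continuous_on UNIV f \<Longrightarrow> (\<lambda>x. f (Lc x) * exp (- EE C (Lc x))) integrable_on cbox (0,0) (1,1)"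
  by (intro integrable_continuous continuous_intros continuous_on_compose2[OF _ continuous_Lc]
      continuous_on_compose2[OF linear_continuous_on[OF bl_EE] continuous_Lc]) auto

lemma cf_diff: "continuous_on UNIV f \<Longrightarrow> continuous_on UNIV g \<Longrightarrow> cf (\<lambda>z. f z - g z) C = cf f C - cf g C"
  unfolding cf_def by (simp add: left_diff_distrib integral_diff[OF integrable_cf integrable_cf])

lemma cf_sum: "finite I \<Longrightarrow> (\<And>i. i \<in> I \<Longrightarrow> continuous_on UNIV (g i)) \<Longrightarrow> cf (\<lambda>z. \<Sum>i\<in>I. g i z) C = (\<Sum>i\<in>I. cf (g i) C)"
  unfolding cf_def sum_distrib_right by (rule Henstock_Kurzweil_Integration.integral_sum) (auto intro: integrable_cf)

lemma Cs_unshift: "C \<in> Cs \<Longrightarrow> C - \<beta>0 \<in> Cs"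
proof -
  assume "C \<in> Cs"
  then have "(C - B) - \<beta>0 \<in> dual_lattice \<Gamma>" unfolding Cs_def using dual_diff[OF _ b_dual] by simp
  moreover have "C - \<beta>0 - B = (C - B) - \<beta>0" by simp
  ultimately show ?thesis unfolding Cs_def by (metis mem_Collect_eq)
qed

lemma coef_sp_comb:
  assumes "finite K0" "K0 \<subseteq> Cs" "C0 \<in> Cs"
  shows "cf (\<lambda>z. \<Sum>C\<in>K0. u C * sp C z) C0 = (if C0 \<in> K0 then u C0 * X0 C0 else 0)"
proof -
  have "cf (\<lambda>z. \<Sum>C\<in>K0. u C * sp C z) C0 = (\<Sum>C\<in>K0. cf (\<lambda>z. u C * sp C z) C0)"
    by (rule cf_sum[OF assms(1)]) (intro continuous_intros cont_sp)
  also have "\<dots> = (\<Sum>C\<in>K0. if C0 = C then u C * X0 C else 0)"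
    by (rule sum.cong) (use assms in \<open>auto simp: cf_scale cf_sp\<close>)
  also have "\<dots> = (if C0 \<in> K0 then u C0 * X0 C0 else 0)" using assms(1) by simp
  finally show ?thesis .
qed

lemma coef_sm_comb:
  assumes "finite K0" "K0 \<subseteq> Cs" "C0 \<in> Cs"
  shows "cf (\<lambda>z. \<Sum>C\<in>K0. u C * sm C z) (C0 + \<beta>0) = (if C0 \<in> K0 then u C0 * Y0 C0 else 0)"
proof -
  have "cf (\<lambda>z. \<Sum>C\<in>K0. u C * sm C z) (C0 + \<beta>0) = (\<Sum>C\<in>K0. cf (\<lambda>z. u C * sm C z) (C0 + \<beta>0))"
    by (rule cf_sum[OF assms(1)]) (intro continuous_intros cont_sm)
  also have "\<dots> = (\<Sum>C\<in>K0. if C0 = C then u C * Y0 C else 0)"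
    by (rule sum.cong) (use assms Cs_shift in \<open>auto simp: cf_scale cf_sm\<close>)
  also have "\<dots> = (if C0 \<in> K0 then u C0 * Y0 C0 else 0)" using assms(1) by simp
  finally show ?thesis .
qed

definition K where "K = {C \<in> Cs. adm C}"

lemma finite_K: "finite K" unfolding K_def K_eq by simp
lemma K_Cs: "K \<subseteq> Cs" unfolding K_def by auto

lemma wpq_sol: "wpq (sol C z) = sp C z" using fun_cong[OF WP_sol] unfolding WP_def .
lemma wmq_sol: "wmq (sol C z) = sm C z" using fun_cong[OF WM_sol] unfolding WM_def .

lemma zero_coefs_imp:
  assumes cP: "continuous_on UNIV P" and qP: "\<And>z \<gamma>. \<gamma> \<in> \<Gamma> \<Longrightarrow> P (z + \<gamma>) = P z * hAB A B \<gamma>"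
    and cM: "continuous_on UNIV M" and qM: "\<And>z \<gamma>. \<gamma> \<in> \<Gamma> \<Longrightarrow> M (z + \<gamma>) = M z * hAB A B \<gamma>"
    and zP: "\<And>C. C \<in> Cs \<Longrightarrow> cf P C = 0" and zM: "\<And>C. C \<in> Cs \<Longrightarrow> cf M (C + \<beta>0) = 0"
  shows "P z = 0 \<and> M z = 0"
proof
  show "P z = 0" by (rule coef_zero_imp[OF cP qP zP])
  have "cf M C = 0" if "C \<in> Cs" for C using zM[OF Cs_unshift[OF that]] by simp
  then show "M z = 0" using coef_zero_imp[OF cM qM] by blast
qed

lemma span_all:
  assumes a: "\<alpha> \<in> H0 \<Gamma> \<beta>0 (hAB A B)"
  shows "\<exists>u. \<alpha> = (\<Sum>C\<in>K. rscale (u C) (sol C))"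
proof -
  have ex: "\<forall>C\<in>K. \<exists>x. cf (WP \<alpha>) C = x * X0 C \<and> cf (WM \<alpha>) (C + \<beta>0) = x * Y0 C"
    using coef_adm[OF a] K_Cs by blast
  then obtain u where u: "\<And>C. C \<in> K \<Longrightarrow> cf (WP \<alpha>) C = u C * X0 C \<and> cf (WM \<alpha>) (C + \<beta>0) = u C * Y0 C"
    by metis
  define P where "P z = WP \<alpha> z - (\<Sum>C\<in>K. u C * sp C z)" for z
  define M where "M z = WM \<alpha> z - (\<Sum>C\<in>K. u C * sm C z)" for z
  have cP: "continuous_on UNIV P" unfolding P_def by (intro continuous_intros WP_cont[OF a] cont_sp)
  have cM: "continuous_on UNIV M" unfolding M_def by (intro continuous_intros WM_cont[OF a] cont_sm)
  have qP: "P (z + \<gamma>) = P z * hAB A B \<gamma>" if "\<gamma> \<in> \<Gamma>" for z \<gamma>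
    unfolding P_def using WP_qp[OF a that] sp_qp[OF _ that] K_Cs
    by (auto simp: left_diff_distrib sum_distrib_right mult.assoc intro!: sum.cong)
  have qM: "M (z + \<gamma>) = M z * hAB A B \<gamma>" if "\<gamma> \<in> \<Gamma>" for z \<gamma>
    unfolding M_def using WM_qp[OF a that] sm_qp[OF _ that] K_Cs
    by (auto simp: left_diff_distrib sum_distrib_right mult.assoc intro!: sum.cong)
  have zP: "cf P C = 0" if C: "C \<in> Cs" for C
  proof -
    have "cf P C = cf (WP \<alpha>) C - cf (\<lambda>z. \<Sum>C\<in>K. u C * sp C z) C"
      unfolding P_def by (rule cf_diff) (intro continuous_intros WP_cont[OF a] cont_sp)+
    also have "\<dots> = 0"
      unfolding coef_sp_comb[OF finite_K K_Cs C]
      using u[of C] coef_nadm[OF a C] C by (auto simp: K_def)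
    finally show ?thesis .
  qed
  have zM: "cf M (C + \<beta>0) = 0" if C: "C \<in> Cs" for C
  proof -
    have "cf M (C + \<beta>0) = cf (WM \<alpha>) (C + \<beta>0) - cf (\<lambda>z. \<Sum>C\<in>K. u C * sm C z) (C + \<beta>0)"
      unfolding M_def by (rule cf_diff) (intro continuous_intros WM_cont[OF a] cont_sm)+
    also have "\<dots> = 0"
      unfolding coef_sm_comb[OF finite_K K_Cs C]
      using u[of C] coef_nadm[OF a C] C by (auto simp: K_def)
    finally show ?thesis .
  qed
  have z: "P z = 0 \<and> M z = 0" for z by (rule zero_coefs_imp[OF cP qP cM qM zP zM])
  have "\<alpha> z = (\<Sum>C\<in>K. rscale (u C) (sol C)) z" for z
  proof (rule wq_inj)
    show "wpq (\<alpha> z) = wpq ((\<Sum>C\<in>K. rscale (u C) (sol C)) z)"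
      using z[of z] unfolding P_def WP_def sum_fun_apply rscale_def wpq_sum wpq_qc wpq_sol
      by (simp add: mult.commute)
    show "wmq (\<alpha> z) = wmq ((\<Sum>C\<in>K. rscale (u C) (sol C)) z)"
      using z[of z] unfolding M_def WM_def sum_fun_apply rscale_def wmq_sum wmq_qc wmq_sol
      by (simp add: mult.commute)
  qed
  then show ?thesis by blast
qed

end




context setting
begin

lemma sol_in: "C \<in> K \<Longrightarrow> sol C \<in> H0 \<Gamma> \<beta>0 (hAB A B)"
  unfolding K_def using sol_H0 by blast

lemma inj_sol: "inj_on sol K"
proof (rule inj_onI, rule ccontr)
  fix C1 C2 assume C1: "C1 \<in> K" and C2: "C2 \<in> K" and e: "sol C1 = sol C2" and ne: "C1 \<noteq> C2"
  have c1: "C1 \<in> Cs" "C2 \<in> Cs" using C1 C2 K_Cs by auto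
  have "X0 C1 = cf (WP (sol C1)) C1" unfolding WP_sol using cf_sp[OF c1(1) c1(1)] by simp
  also have "\<dots> = cf (WP (sol C2)) C1" using e by simp
  also have "\<dots> = 0" unfolding WP_sol using cf_sp[OF c1(2) c1(1)] ne by simp
  finally have x: "X0 C1 = 0" .
  have "Y0 C1 = cf (WM (sol C1)) (C1 + \<beta>0)" unfolding WM_sol using cf_sm[OF c1(1) Cs_shift[OF c1(1)]] by simp
  also have "\<dots> = cf (WM (sol C2)) (C1 + \<beta>0)" using e by simp
  also have "\<dots> = 0" unfolding WM_sol using cf_sm[OF c1(2) Cs_shift[OF c1(1)]] ne by simp
  finally have "Y0 C1 = 0" .
  then show False using x XY0_nz by blast
qed

lemma indep: "V.independent (sol ` K)"
proof (rule V.independent_if_scalars_zero)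
  show "finite (sol ` K)" using finite_K by simp
  fix f s assume s0: "(\<Sum>x\<in>sol ` K. rscale (f x) x) = 0" and s: "s \<in> sol ` K"
  then obtain C0 where C0: "C0 \<in> K" and sC: "s = sol C0" by blast
  define u where "u C = f (sol C)" for C
  have "(\<Sum>C\<in>K. rscale (u C) (sol C)) = 0"
    using s0 unfolding u_def sum.reindex[OF inj_sol] by (simp add: o_def)
  then have "(\<Sum>C\<in>K. rscale (u C) (sol C)) z = (0 :: complex \<Rightarrow> quat) z" for z by simp
  then have z: "(\<Sum>C\<in>K. qmul (sol C z) (qc (u C))) = 0" for z
    unfolding sum_fun_apply rscale_def by simp
  have zP: "(\<Sum>C\<in>K. u C * sp C z) = 0" for z
    using arg_cong[OF z[of z], of wpq] unfolding wpq_sum wpq_qc wpq_sol wpq_0 by (simp add: mult.commute)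
  have zM: "(\<Sum>C\<in>K. u C * sm C z) = 0" for z
    using arg_cong[OF z[of z], of wmq] unfolding wmq_sum wmq_qc wmq_sol wmq_0 by (simp add: mult.commute)
  have c0: "C0 \<in> Cs" using C0 K_Cs by auto
  have "u C0 * X0 C0 = 0"
    using coef_sp_comb[OF finite_K K_Cs c0, of u] C0 unfolding zP by (simp add: cf_def)
  moreover have "u C0 * Y0 C0 = 0"
    using coef_sm_comb[OF finite_K K_Cs c0, of u] C0 unfolding zM by (simp add: cf_def)
  ultimately have "u C0 = 0" using XY0_nz[of C0] by auto
  then show "f s = 0" unfolding u_def sC .
qed

lemma H0_span: "H0 \<Gamma> \<beta>0 (hAB A B) = V.span (sol ` K)"
proof
  show "H0 \<Gamma> \<beta>0 (hAB A B) \<subseteq> V.span (sol ` K)"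
  proof
    fix \<alpha> assume a: "\<alpha> \<in> H0 \<Gamma> \<beta>0 (hAB A B)"
    then obtain u where u: "\<alpha> = (\<Sum>C\<in>K. rscale (u C) (sol C))" using span_all by blast
    show "\<alpha> \<in> V.span (sol ` K)" unfolding u
      by (intro V.span_sum V.span_scale V.span_base) auto
  qed
  show "V.span (sol ` K) \<subseteq> H0 \<Gamma> \<beta>0 (hAB A B)"
    by (rule V.span_minimal) (use sol_in H0_subspace in auto)
qed

lemma cdim_K: "cdim (H0 \<Gamma> \<beta>0 (hAB A B)) = card K"
proof -
  have "cdim (H0 \<Gamma> \<beta>0 (hAB A B)) = V.dim (V.span (sol ` K))" unfolding cdim_def H0_span ..
  also have "\<dots> = card (sol ` K)" by (rule V.dim_span_eq_card_independent[OF indep])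
  also have "\<dots> = card K" by (rule card_image[OF inj_sol])
  finally show ?thesis .
qed

lemma main_loc:
  assumes ne: "H0 \<Gamma> \<beta>0 (hAB A B) \<noteq> {0}"
  shows "cfinite_dim (H0 \<Gamma> \<beta>0 (hAB A B)) \<and> cdim (H0 \<Gamma> \<beta>0 (hAB A B)) \<le> 2 \<and>
         (cdim (H0 \<Gamma> \<beta>0 (hAB A B)) = 2 \<longleftrightarrow> double_point \<Gamma> \<beta>0 A)"
proof (intro conjI)
  show "cfinite_dim (H0 \<Gamma> \<beta>0 (hAB A B))"
    unfolding cfinite_dim_def
    by (rule exI[of _ "sol ` K"]) (use finite_K sol_in H0_span in auto)
  have Keq: "K = {Cp, Cm} \<inter> Cs" unfolding K_def K_eq ..
  have Kne: "K \<noteq> {}"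
  proof
    assume "K = {}"
    then have "H0 \<Gamma> \<beta>0 (hAB A B) = {0}" unfolding H0_span using V.span_empty by simp
    then show False using ne by simp
  qed
  have cK: "card K \<le> 2"
  proof -
    have "card K \<le> card {Cp, Cm}" unfolding Keq by (rule card_mono) auto
    also have "\<dots> \<le> 2" by (simp add: card_insert_le_m1)
    finally show ?thesis .
  qed
  then show "cdim (H0 \<Gamma> \<beta>0 (hAB A B)) \<le> 2" unfolding cdim_K .
  have both: "card K = 2 \<longleftrightarrow> Cp \<in> Cs \<and> Cm \<in> Cs"
  proof
    assume c: "card K = 2"
    show "Cp \<in> Cs \<and> Cm \<in> Cs"
    proof (rule ccontr)
      assume "\<not> (Cp \<in> Cs \<and> Cm \<in> Cs)"
      then have "K \<subseteq> {Cp} \<or> K \<subseteq> {Cm}" unfolding Keq by auto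
      then have "card K \<le> 1"
      proof
        assume "K \<subseteq> {Cp}" then have "card K \<le> card {Cp}" by (intro card_mono) auto
        then show ?thesis by simp
      next
        assume "K \<subseteq> {Cm}" then have "card K \<le> card {Cm}" by (intro card_mono) auto
        then show ?thesis by simp
      qed
      then show False using c by simp
    qed
  next
    assume "Cp \<in> Cs \<and> Cm \<in> Cs"
    then have "K = {Cp, Cm}" unfolding Keq by auto
    then show "card K = 2" using Cp_ne_Cm by simp
  qed
  have "Cp \<in> Cs \<or> Cm \<in> Cs" using Kne unfolding Keq by auto
  then show "cdim (H0 \<Gamma> \<beta>0 (hAB A B)) = 2 \<longleftrightarrow> double_point \<Gamma> \<beta>0 A"
    unfolding cdim_K both using dp_of_both dp_transfer by blast
qed

end

theorem lemma2p5:
  fixes \<Gamma> :: "complex set" and \<beta>0 A B :: complex and f g :: "complex \<Rightarrow> quat"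
  assumes "ham_stat_torus \<Gamma> \<beta>0 f g"
    and "hAB A B \<in> Spec \<Gamma> \<beta>0"
    and "A \<noteq> 0"
  shows "cfinite_dim (H0 \<Gamma> \<beta>0 (hAB A B)) \<and> cdim (H0 \<Gamma> \<beta>0 (hAB A B)) \<le> 2 \<and>
         (cdim (H0 \<Gamma> \<beta>0 (hAB A B)) = 2 \<longleftrightarrow> double_point \<Gamma> \<beta>0 A)"
proof -
  from assms(1) have lat: "is_lattice \<Gamma>" and bd: "\<beta>0 \<in> dual_lattice \<Gamma>" and bnz: "\<beta>0 \<noteq> 0"
    unfolding ham_stat_torus_def by auto
  from lat obtain w1 w2 where w: "Im (cnj w1 * w2) \<noteq> 0" and G: "\<Gamma> = {of_int m * w1 + of_int n * w2 | m n. True}"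
    unfolding is_lattice_def by blast
  interpret setting w1 w2 \<Gamma> \<beta>0 A B
    by unfold_locales (use w G bd bnz assms(3) in auto)
  have "H0 \<Gamma> \<beta>0 (hAB A B) \<noteq> {0}" using assms(2) unfolding Spec_def by auto
  then show ?thesis by (rule main_loc)
qed


end
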